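(* Let $T$ be a basic maximal rigid object of $\mathcal{C}_n$ with top summand $T_1=(1,n-1)$, and let $X\in\mathcal{F}$. If both $\sigma^{\mathcal{T}}_X$ and $\sigma^{\mathcal{D}}_X$ are non-zero strings, then there is a $\mathcal{D}$-arrow $\beta_X$ in the quiver of $\Lambda_T$ from the end vertex of $\sigma^{\mathcal{T}}_X$ to the end vertex of $\sigma^{\mathcal{D}}_X$; in particular $(\sigma^{\mathcal{D}}_X)^{-1}\beta_X\sigma^{\mathcal{T}}_X$ is a well-defined string.
   Context: Let $k$ be algebraically closed, $n\ge2$, $\mathcal{T}_n$ the tube of rank $n$ (finite-dimensional nilpotent representations of the cyclically oriented $\tilde A_{n-1}$-quiver; AR-translation $\tau$), $\mathcal{C}_n=D^b(\mathcal{T}_n)/\tau^{-1}[1]$ the cluster tube, with indecomposables identified with those of $\mathcal{T}_n$. Indecomposables have coordinates $(a,b)$, $a\in\mathbb{Z}/n$ (represented in $\{1,\dots,n\}$), $b\ge1$ the quasilength, with $\tau(a,b)=(a-1,b)$ and irreducible maps $(a,b)\to(a,b+1)$, $(a,b)\to(a+1,b-1)$. For indecomposables $X,Y$, $\operatorname{Hom}_{\mathcal{C}_n}(X,Y)=\operatorname{Hom}_{\mathcal{T}_n}(X,Y)\oplus\operatorname{Hom}_{D^b}(X,\tau^{-1}Y[1])$; elements of the first summand are $\mathcal{T}$-maps, of the second $\mathcal{D}$-maps. $R^{\mathcal{T}}(X)$ (resp. $R^{\mathcal{D}}(X)$) is the set of indecomposables with a nonzero $\mathcal{T}$-map (resp.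 $\mathcal{D}$-map) to $X$. $T=\bigoplus_{i=1}^{n-1}T_i$ is basic maximal rigid ($\operatorname{Ext}^1(T,T)=0$ and $\operatorname{Ext}^1(T\oplus Z,T\oplus Z)=0\Rightarrow Z\in\operatorname{add}T$); its unique summand of quasilength $n-1$ (top summand) is, by choice of coordinates, $T_1=(1,n-1)$. $\mathcal{F}$ is the set of indecomposables $(a,b)$, $a\in\{1,\dots,n\}$, with $b\le n-1$ or $a+b\le2n-1$. The quiver of $\Lambda_T=\operatorname{End}_{\mathcal{C}_n}(T)^{\mathrm{op}}$ has a vertex for each $T_i$ and arrows $i\to j$ for maps $T_j\to T_i$ irreducible in $\operatorname{add}T$; the arrow is a $\mathcal{D}$-arrow if that map is a $\mathcal{D}$-map. A string is a trivial string at a vertex, or a word in arrows and formal inverses with matching endpoints, no letter followed by its inverse, and no subword of it or its inverse a zero relation of $\Lambda_T$. For $*\in\{\mathcal{T},\mathcal{D}\}$: if $R^*(X)\cap\operatorname{add}T\neq\emptyset$, $\sigma^*_X$ denotes the unique string that traverses exactly the vertices of the summands of $T$ in $R^*(X)$, each exactly once, and ends at the vertex of the one of highest quasilength; otherwise $\sigma^*_X$ is the zero string. *)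

theory Defs
  imports "HOL-Computational_Algebra.Polynomial" "HOL-Number_Theory.Cong"
begin

text \<open>Indecomposables are pairs (a,b): a in {1..n} the residue, b >= 1 the quasilength.
  Convention: (a,b) is the uniserial module with composition factors S_a (socle),
  S_(a+1), ..., S_(a+b-1) (top), indices mod n.  Then tau (a,b) = (a-1,b), and
  (a,b) -> (a,b+1) (mono), (a,b) -> (a+1,b-1) (epi) are the irreducible maps.\<close>

type_synonym obj = "int \<times> int"

definition valid :: "nat \<Rightarrow> obj \<Rightarrow> bool" where
  "valid n X \<longleftrightarrow> 1 \<le> fst X \<and> fst X \<le> int n \<and> 1 \<le> snd X"

definition rep :: "nat \<Rightarrow> int \<Rightarrow> int" where
  "rep n a = (a - 1) mod int n + 1"

definition tau :: "nat \<Rightarrow> obj \<Rightarrow> obj" where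
  "tau n X = (rep n (fst X - 1), snd X)"

definition tauinv :: "nat \<Rightarrow> obj \<Rightarrow> obj" where
  "tauinv n X = (rep n (fst X + 1), snd X)"

text \<open>Basis of Hom_T(X,Y): the index l is the length of the image; a basis map with image
  length l exists iff the top quotient of X of length l is isomorphic to the bottom
  submodule of Y of length l.\<close>

definition BT :: "nat \<Rightarrow> obj \<Rightarrow> obj \<Rightarrow> int set" where
  "BT n X Y = {l. 1 \<le> l \<and> l \<le> snd X \<and> l \<le> snd Y \<and> [fst X + snd X - l = fst Y] (mod int n)}"

text \<open>Basis of the D-part Hom_D(X, tau^-1 Y[1]).  By Serre duality (S = tau[1]) this space is
  D Hom_T(tau^-2 Y, X); we index it by the dual basis of the basis of Hom_T(tau^-2 Y, X).\<close>

definition BD :: "nat \<Rightarrow> obj \<Rightarrow> obj \<Rightarrow> int set" where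
  "BD n X Y = BT n (tauinv n (tauinv n Y)) X"

text \<open>Morphisms X -> Y in C_n over the field 'k: coefficients w.r.t. the T-basis and the D-basis.\<close>

type_synonym 'k mor = "(int \<Rightarrow> 'k) \<times> (int \<Rightarrow> 'k)"

definition morph :: "('k::field) itself \<Rightarrow> nat \<Rightarrow> obj \<Rightarrow> obj \<Rightarrow> 'k mor set" where
  "morph K n X Y = {f. (\<forall>l. l \<notin> BT n X Y \<longrightarrow> fst f l = 0) \<and> (\<forall>q. q \<notin> BD n X Y \<longrightarrow> snd f q = 0)}"

definition zmor :: "('k::field) mor" where
  "zmor = (\<lambda>_. 0, \<lambda>_. 0)"

definition madd :: "('k::field) mor \<Rightarrow> 'k mor \<Rightarrow> 'k mor" where
  "madd f g = (\<lambda>l. fst f l + fst g l, \<lambda>q. snd f q + snd g q)"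

definition idm :: "obj \<Rightarrow> ('k::field) mor" where
  "idm X = (\<lambda>l. if l = snd X then 1 else 0, \<lambda>_. 0)"

text \<open>T-maps compose as maps of uniserial
  modules (image lengths l, m give image length l+m-len Y if positive, else 0);
  D o T and T o D are given by the module structure of the dual Hom-spaces (Serre duality);
  D o D = 0 (it lands in Hom_D(X, F^2 Z) = 0, the category being hereditary).\<close>

definition comp :: "nat \<Rightarrow> obj \<Rightarrow> obj \<Rightarrow> obj \<Rightarrow> ('k::field) mor \<Rightarrow> 'k mor \<Rightarrow> 'k mor" where
  "comp n X Y Z g f =
     (\<lambda>r. \<Sum>l\<in>BT n X Y. \<Sum>m\<in>BT n Y Z.
            if l + m - snd Y = r \<and> 1 \<le> r then fst f l * fst g m else 0,
      \<lambda>s. (\<Sum>m\<in>BT n X Y. \<Sum>q\<in>BD n Y Z.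
            if s = q - m + snd X \<and> s \<in> BD n X Z then fst f m * snd g q else 0)
        + (\<Sum>q\<in>BD n X Y. \<Sum>m\<in>BT n Y Z.
            if s = q - m + snd Z \<and> s \<in> BD n X Z then snd f q * fst g m else 0))"

definition iso :: "('k::field) itself \<Rightarrow> nat \<Rightarrow> obj \<Rightarrow> obj \<Rightarrow> 'k mor \<Rightarrow> bool" where
  "iso K n X Y f \<longleftrightarrow> f \<in> morph K n X Y \<and>
     (\<exists>g\<in>morph K n Y X. comp n X Y X g f = idm X \<and> comp n Y X Y f g = idm Y)"

definition rad :: "('k::field) itself \<Rightarrow> nat \<Rightarrow> obj \<Rightarrow> obj \<Rightarrow> 'k mor set" where
  "rad K n X Y = {f \<in> morph K n X Y. \<not> iso K n X Y f}"

text \<open>rad^2 of add T (T given by the summands T 1, ..., T (n-1)) between X and Y: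
  the span of composites of two radical maps through a summand of T.\<close>

inductive_set rad2 :: "('k::field) itself \<Rightarrow> nat \<Rightarrow> (nat \<Rightarrow> obj) \<Rightarrow> obj \<Rightarrow> obj \<Rightarrow> 'k mor set"
  for K n T X Y where
  zero: "zmor \<in> rad2 K n T X Y"
| add: "\<lbrakk> m \<in> {1..n-1}; h \<in> rad K n X (T m); g \<in> rad K n (T m) Y; r \<in> rad2 K n T X Y \<rbrakk>
        \<Longrightarrow> madd (comp n X (T m) Y g h) r \<in> rad2 K n T X Y"

definition RT :: "nat \<Rightarrow> obj \<Rightarrow> obj set" where
  "RT n X = {Y. valid n Y \<and> BT n Y X \<noteq> {}}"

definition RD :: "nat \<Rightarrow> obj \<Rightarrow> obj set" where
  "RD n X = {Y. valid n Y \<and> BD n Y X \<noteq> {}}"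

text \<open>Ext^1_C(X,Y) = Hom_C(X, Y[1]) and Y[1] = tau Y in C_n (as tau^-1 [1] = id).\<close>

definition ext1_nz :: "nat \<Rightarrow> obj \<Rightarrow> obj \<Rightarrow> bool" where
  "ext1_nz n X Y \<longleftrightarrow> BT n X (tau n Y) \<noteq> {} \<or> BD n X (tau n Y) \<noteq> {}"

definition rigid :: "nat \<Rightarrow> obj set \<Rightarrow> bool" where
  "rigid n S \<longleftrightarrow> (\<forall>X\<in>S. \<forall>Y\<in>S. \<not> ext1_nz n X Y)"

text \<open>S = set of indecomposable summands of the basic object T.  An object Z of C_n is a finite
  direct sum of indecomposables; Ext^1(T+Z,T+Z) = 0 only depends on the set of summands.\<close>

definition max_rigid :: "nat \<Rightarrow> obj set \<Rightarrow> bool" where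
  "max_rigid n S \<longleftrightarrow> finite S \<and> (\<forall>X\<in>S. valid n X) \<and> rigid n S \<and>
     (\<forall>Z. finite Z \<and> (\<forall>X\<in>Z. valid n X) \<and> rigid n (S \<union> Z) \<longrightarrow> Z \<subseteq> S)"

definition Fset :: "nat \<Rightarrow> obj set" where
  "Fset n = {X. valid n X \<and> (snd X \<le> int n - 1 \<or> fst X + snd X \<le> 2 * int n - 1)}"

datatype kind = TK | DK

text \<open>An arrow (i, j, k, x) : i -> j corresponds to the basis map of Hom_C(T j, T i) of kind k
  (T-map or D-map) with index x, provided it is irreducible in add T, i.e. lies in
  rad \ rad^2.  (Since compositions of basis maps are basis maps or 0, rad^2 is spanned by
  basis maps, so these basis maps give a basis of rad/rad^2, i.e. the arrows.)\<close>

type_synonym arrow = "nat \<times> nat \<times> kind \<times> int"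

definition asrc :: "arrow \<Rightarrow> nat" where "asrc a = fst a"
definition atgt :: "arrow \<Rightarrow> nat" where "atgt a = fst (snd a)"
definition akind :: "arrow \<Rightarrow> kind" where "akind a = fst (snd (snd a))"

definition bmor :: "arrow \<Rightarrow> ('k::field) mor" where
  "bmor a = (case akind a of
      TK \<Rightarrow> (\<lambda>l. if l = snd (snd (snd a)) then 1 else 0, \<lambda>_. 0)
    | DK \<Rightarrow> (\<lambda>_. 0, \<lambda>q. if q = snd (snd (snd a)) then 1 else 0))"

definition is_arrow :: "('k::field) itself \<Rightarrow> nat \<Rightarrow> (nat \<Rightarrow> obj) \<Rightarrow> arrow \<Rightarrow> bool" where
  "is_arrow K n T a \<longleftrightarrow> asrc a \<in> {1..n-1} \<and> atgt a \<in> {1..n-1} \<and>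
     (bmor a :: 'k mor) \<in> rad K n (T (atgt a)) (T (asrc a)) \<and>
     (bmor a :: 'k mor) \<notin> rad2 K n T (T (atgt a)) (T (asrc a))"

text \<open>Map of a path a1 a2 ... am (a_t : v_(t-1) -> v_t): map(a1) o ... o map(am) : T v_m -> T v_0.\<close>

fun pathmor :: "('k::field) itself \<Rightarrow> nat \<Rightarrow> (nat \<Rightarrow> obj) \<Rightarrow> arrow list \<Rightarrow> 'k mor" where
  "pathmor K n T [] = zmor"
| "pathmor K n T [a] = bmor a"
| "pathmor K n T (a # b # r) =
     comp n (T (atgt (last (b # r)))) (T (atgt a)) (T (asrc a)) (bmor a) (pathmor K n T (b # r))"

definition is_path :: "arrow list \<Rightarrow> bool" where
  "is_path p \<longleftrightarrow> (\<forall>t. Suc t < length p \<longrightarrow> atgt (p ! t) = asrc (p ! Suc t))"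

definition zero_rel :: "('k::field) itself \<Rightarrow> nat \<Rightarrow> (nat \<Rightarrow> obj) \<Rightarrow> arrow list \<Rightarrow> bool" where
  "zero_rel K n T p \<longleftrightarrow> 2 \<le> length p \<and> is_path p \<and> (\<forall>a\<in>set p. is_arrow K n T a) \<and>
     pathmor K n T p = (zmor :: 'k mor)"

text \<open>Letters: (arrow, True) = the arrow, (arrow, False) = its formal inverse.  A walk is given
  by a start vertex and a list of letters (read in the order of traversal).\<close>

type_synonym letter = "arrow \<times> bool"

definition lsrc :: "letter \<Rightarrow> nat" where
  "lsrc x = (if snd x then asrc (fst x) else atgt (fst x))"
definition ltgt :: "letter \<Rightarrow> nat" where
  "ltgt x = (if snd x then atgt (fst x) else asrc (fst x))"

definition flip :: "letter \<Rightarrow> letter" where "flip x = (fst x, \<not> snd x)"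

definition inv_letters :: "letter list \<Rightarrow> letter list" where
  "inv_letters ls = rev (map flip ls)"

definition verts :: "nat \<Rightarrow> letter list \<Rightarrow> nat list" where
  "verts v ls = v # map ltgt ls"

definition endv :: "nat \<Rightarrow> letter list \<Rightarrow> nat" where
  "endv v ls = last (verts v ls)"

definition sublists :: "'a list \<Rightarrow> 'a list set" where
  "sublists xs = {take (j - i) (drop i xs) | i j. i \<le> j \<and> j \<le> length xs}"

definition is_string :: "('k::field) itself \<Rightarrow> nat \<Rightarrow> (nat \<Rightarrow> obj) \<Rightarrow> nat \<Rightarrow> letter list \<Rightarrow> bool" where
  "is_string K n T v ls \<longleftrightarrow>
     v \<in> {1..n-1} \<and>
     (\<forall>x\<in>set ls. is_arrow K n T (fst x)) \<and>
     (ls \<noteq> [] \<longrightarrow> lsrc (hd ls) = v) \<and>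
     (\<forall>t. Suc t < length ls \<longrightarrow> ltgt (ls ! t) = lsrc (ls ! Suc t)) \<and>
     (\<forall>t. Suc t < length ls \<longrightarrow> \<not> (fst (ls ! t) = fst (ls ! Suc t) \<and> snd (ls ! t) \<noteq> snd (ls ! Suc t))) \<and>
     (\<forall>w\<in>sublists ls. (\<forall>x\<in>set w. snd x) \<longrightarrow> \<not> zero_rel K n T (map fst w)) \<and>
     (\<forall>w\<in>sublists ls. (\<forall>x\<in>set w. \<not> snd x) \<longrightarrow> \<not> zero_rel K n T (rev (map fst w)))"

definition is_sigma :: "('k::field) itself \<Rightarrow> nat \<Rightarrow> (nat \<Rightarrow> obj) \<Rightarrow> obj set \<Rightarrow> nat \<Rightarrow> letter list \<Rightarrow> bool" where
  "is_sigma K n T R v ls \<longleftrightarrow> is_string K n T v ls \<and> distinct (verts v ls) \<and>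
     set (verts v ls) = {i \<in> {1..n-1}. T i \<in> R} \<and>
     (\<forall>i\<in>{1..n-1}. T i \<in> R \<longrightarrow> snd (T i) \<le> snd (T (endv v ls)))"

definition is_top :: "nat \<Rightarrow> (nat \<Rightarrow> obj) \<Rightarrow> obj set \<Rightarrow> nat \<Rightarrow> bool" where
  "is_top n T R i \<longleftrightarrow> i \<in> {1..n-1} \<and> T i \<in> R \<and>
     (\<forall>j\<in>{1..n-1}. T j \<in> R \<longrightarrow> snd (T j) \<le> snd (T i))"

end

theory Submission
  imports Defs
begin


definition wing :: "nat \<Rightarrow> obj \<Rightarrow> bool" where
  "wing n Y \<longleftrightarrow> 1 \<le> fst Y \<and> 1 \<le> snd Y \<and> fst Y + snd Y \<le> int n"

definition cross :: "obj \<Rightarrow> obj \<Rightarrow> bool" where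
  "cross Y Z \<longleftrightarrow> fst Y < fst Z \<and> fst Z \<le> fst Y + snd Y \<and> fst Y + snd Y \<le> fst Z + snd Z - 1"

lemma cong_small_eq:
  fixes x y :: int
  assumes "\<bar>x - y\<bar> < int n" "[x = y] (mod int n)"
  shows "x = y"
proof -
  have "int n dvd (x - y)" using assms(2) by (simp add: cong_iff_dvd_diff)
  then obtain k where k: "x - y = int n * k" by blast
  show ?thesis
  proof (cases "k = 0")
    case True then show ?thesis using k by simp
  next
    case False
    have k1: "1 \<le> \<bar>k\<bar>" using False by linarith
    have "int n * 1 \<le> int n * \<bar>k\<bar>" using k1 by (intro mult_left_mono) auto
    then have "int n * 1 \<le> \<bar>int n * k\<bar>" by (simp add: abs_mult)
    then show ?thesis using assms(1) k by simp
  qed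
qed

lemma cong_eq_or_plus:
  fixes x y :: int
  assumes "-int n < x - y" "x - y \<le> int n" "[x = y] (mod int n)"
  shows "x = y \<or> x = y + int n"
proof -
  have "int n dvd (x - y)" using assms(3) by (simp add: cong_iff_dvd_diff)
  then obtain k where k: "x - y = int n * k" by blast
  have n0: "int n > 0" using assms(1,2) by linarith
  have "k > -1"
  proof (rule ccontr)
    assume "\<not> k > -1"
    then have "int n * k \<le> int n * (-1)" using n0 by (intro mult_left_mono) auto
    then show False using k assms(1) by simp
  qed
  moreover have "k < 2"
  proof (rule ccontr)
    assume "\<not> k < 2"
    then have "int n * 2 \<le> int n * k" using n0 by (intro mult_left_mono) auto
    then show False using k assms(2) n0 by simp
  qed
  ultimately have "k = 0 \<or> k = 1" by linarith
  then show ?thesis using k by auto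
qed

lemma rep_cong: "n > 0 \<Longrightarrow> [rep n a = a] (mod int n)"
  unfolding rep_def cong_def by (simp add: mod_simps)

lemma BT_iff: "l \<in> BT n X Y \<longleftrightarrow> 1 \<le> l \<and> l \<le> snd X \<and> l \<le> snd Y \<and> [fst X + snd X - l = fst Y] (mod int n)"
  unfolding BT_def by simp

lemma BD_iff:
  assumes "n > 0"
  shows "l \<in> BD n X Y \<longleftrightarrow> 1 \<le> l \<and> l \<le> snd Y \<and> l \<le> snd X \<and> [fst Y + 2 + snd Y - l = fst X] (mod int n)"
proof -
  have c: "[fst (tauinv n (tauinv n Y)) = fst Y + 2] (mod int n)"
  proof -
    have "[rep n (rep n (fst Y + 1) + 1) = rep n (fst Y + 1) + 1] (mod int n)" using rep_cong assms by blast
    moreover have "[rep n (fst Y + 1) + 1 = fst Y + 1 + 1] (mod int n)" using rep_cong[OF assms] cong_add_rcancel by blast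
    ultimately have "[rep n (rep n (fst Y + 1) + 1) = fst Y + 1 + 1] (mod int n)" by (rule cong_trans)
    then show ?thesis unfolding tauinv_def by (simp add: add.assoc)
  qed
  have "[fst (tauinv n (tauinv n Y)) + snd Y - l = fst Y + 2 + snd Y - l] (mod int n)"
    using c by (intro cong_diff cong_add) auto
  moreover have "snd (tauinv n (tauinv n Y)) = snd Y" unfolding tauinv_def by simp
  ultimately show ?thesis unfolding BD_def BT_iff
    by (metis cong_sym cong_trans)
qed

lemma tau_cong: "n > 0 \<Longrightarrow> [fst (tau n Y) = fst Y - 1] (mod int n)"
  unfolding tau_def using rep_cong by simp

lemma ext1_iff:
  assumes "n > 0"
  shows "ext1_nz n X Y \<longleftrightarrow> (\<exists>l. 1 \<le> l \<and> l \<le> snd X \<and> l \<le> snd Y \<and>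
     ([fst X + snd X - l = fst Y - 1] (mod int n) \<or> [fst Y + 1 + snd Y - l = fst X] (mod int n)))"
proof -
  have c: "[fst (tau n Y) = fst Y - 1] (mod int n)" using tau_cong assms by blast
  have s: "snd (tau n Y) = snd Y" unfolding tau_def by simp
  have e1: "[fst X + snd X - l = fst (tau n Y)] (mod int n) \<longleftrightarrow> [fst X + snd X - l = fst Y - 1] (mod int n)" for l
    using c by (meson cong_sym cong_trans)
  have e2: "[fst (tau n Y) + 2 + snd Y - l = fst X] (mod int n) \<longleftrightarrow> [fst Y + 1 + snd Y - l = fst X] (mod int n)" for l
  proof -
    have "[fst (tau n Y) + 2 + snd Y - l = fst Y - 1 + 2 + snd Y - l] (mod int n)"
      using c by (intro cong_diff cong_add) auto
    moreover have eq: "fst Y - 1 + 2 + snd Y - l = fst Y + 1 + snd Y - l" by simp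
    ultimately have h: "[fst (tau n Y) + 2 + snd Y - l = fst Y + 1 + snd Y - l] (mod int n)" by (simp only: eq)
    show ?thesis
    proof
      assume "[fst (tau n Y) + 2 + snd Y - l = fst X] (mod int n)"
      then show "[fst Y + 1 + snd Y - l = fst X] (mod int n)" using h cong_sym cong_trans by blast
    next
      assume "[fst Y + 1 + snd Y - l = fst X] (mod int n)"
      then show "[fst (tau n Y) + 2 + snd Y - l = fst X] (mod int n)" using h cong_trans by blast
    qed
  qed
  have A: "BT n X (tau n Y) \<noteq> {} \<longleftrightarrow> (\<exists>l. 1 \<le> l \<and> l \<le> snd X \<and> l \<le> snd Y \<and> [fst X + snd X - l = fst Y - 1] (mod int n))"
    using e1 s by (simp add: ex_in_conv[symmetric] BT_iff)
  have B: "BD n X (tau n Y) \<noteq> {} \<longleftrightarrow> (\<exists>l. 1 \<le> l \<and> l \<le> snd X \<and> l \<le> snd Y \<and> [fst Y + 1 + snd Y - l = fst X] (mod int n))"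
    using e2 s by (simp add: ex_in_conv[symmetric] BD_iff[OF assms] conj_commute conj_left_commute)
  show ?thesis unfolding ext1_nz_def A B by blast
qed

lemma BT_wing:
  assumes "n > 0" "wing n X" "wing n Y"
  shows "l \<in> BT n X Y \<longleftrightarrow> l = fst X + snd X - fst Y \<and> fst X \<le> fst Y \<and> fst Y \<le> fst X + snd X - 1 \<and> fst X + snd X \<le> fst Y + snd Y"
proof
  assume "l \<in> BT n X Y"
  then have l: "1 \<le> l" "l \<le> snd X" "l \<le> snd Y" "[fst X + snd X - l = fst Y] (mod int n)" by (auto simp: BT_iff)
  have "fst X + snd X - l = fst Y"
    using l assms(2,3) unfolding wing_def by (intro cong_small_eq[of _ _ n]) auto
  then show "l = fst X + snd X - fst Y \<and> fst X \<le> fst Y \<and> fst Y \<le> fst X + snd X - 1 \<and> fst X + snd X \<le> fst Y + snd Y"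
    using l by linarith
next
  assume "l = fst X + snd X - fst Y \<and> fst X \<le> fst Y \<and> fst Y \<le> fst X + snd X - 1 \<and> fst X + snd X \<le> fst Y + snd Y"
  then show "l \<in> BT n X Y" by (auto simp: BT_iff)
qed

lemma BD_wing_cases:
  assumes "n > 0" "wing n X" "wing n Y" "l \<in> BD n X Y"
  shows "fst X = fst Y + snd Y + 2 - l \<or> (l = 1 \<and> fst X = 1 \<and> fst Y + snd Y = int n)"
proof -
  have l: "1 \<le> l" "l \<le> snd Y" "l \<le> snd X" "[fst Y + 2 + snd Y - l = fst X] (mod int n)"
    using assms(4) BD_iff[OF assms(1)] by auto
  have "fst Y + 2 + snd Y - l = fst X \<or> fst Y + 2 + snd Y - l = fst X + int n"
    using l assms(2,3) unfolding wing_def by (intro cong_eq_or_plus) auto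
  then show ?thesis using l assms(2,3) unfolding wing_def by auto
qed

lemma one_in_BD:
  assumes "n > 0" "1 \<le> snd X" "1 \<le> snd Y"
  shows "1 \<in> BD n X Y \<longleftrightarrow> [fst Y + snd Y + 1 = fst X] (mod int n)"
proof -
  have e: "fst Y + 2 + snd Y - 1 = fst Y + snd Y + 1" by simp
  show ?thesis using BD_iff[OF assms(1), of 1 X Y] assms(2,3) unfolding e by simp
qed

lemma ext_wing:
  assumes "n > 0" "wing n X" "wing n Y"
  shows "ext1_nz n X Y \<longleftrightarrow> cross X Y \<or> cross Y X"
proof
  assume "ext1_nz n X Y"
  then obtain l where l: "1 \<le> l" "l \<le> snd X" "l \<le> snd Y"
    and c: "[fst X + snd X - l = fst Y - 1] (mod int n) \<or> [fst Y + 1 + snd Y - l = fst X] (mod int n)"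
    using ext1_iff[OF assms(1)] by auto
  from c show "cross X Y \<or> cross Y X"
  proof
    assume h: "[fst X + snd X - l = fst Y - 1] (mod int n)"
    have "fst X + snd X - l = fst Y - 1"
      using h l assms(2,3) unfolding wing_def by (intro cong_small_eq[of _ _ n]) auto
    then show ?thesis using l unfolding cross_def by auto
  next
    assume h: "[fst Y + 1 + snd Y - l = fst X] (mod int n)"
    have "fst Y + 1 + snd Y - l = fst X"
      using h l assms(2,3) unfolding wing_def by (intro cong_small_eq[of _ _ n]) auto
    then show ?thesis using l unfolding cross_def by auto
  qed
next
  assume "cross X Y \<or> cross Y X"
  then show "ext1_nz n X Y"
  proof
    assume h: "cross X Y"
    define l where "l = fst X + snd X + 1 - fst Y"
    have "1 \<le> l \<and> l \<le> snd X \<and> l \<le> snd Y \<and> [fst X + snd X - l = fst Y - 1] (mod int n)"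
      using h unfolding l_def cross_def by auto
    then show ?thesis using ext1_iff[OF assms(1)] by blast
  next
    assume h: "cross Y X"
    define l where "l = fst Y + snd Y + 1 - fst X"
    have "1 \<le> l \<and> l \<le> snd X \<and> l \<le> snd Y \<and> [fst Y + 1 + snd Y - l = fst X] (mod int n)"
      using h unfolding l_def cross_def by auto
    then show ?thesis using ext1_iff[OF assms(1)] by blast
  qed
qed

lemma RT_wing:
  assumes "n > 0" "wing n Y" "1 \<le> fst X" "fst X \<le> int n"
  shows "BT n Y X \<noteq> {} \<longleftrightarrow> fst Y \<le> fst X \<and> fst X \<le> fst Y + snd Y - 1 \<and> fst Y + snd Y - fst X \<le> snd X"
proof
  assume "BT n Y X \<noteq> {}"
  then obtain l where "l \<in> BT n Y X" by auto
  then have l: "1 \<le> l" "l \<le> snd Y" "l \<le> snd X" "[fst Y + snd Y - l = fst X] (mod int n)" by (auto simp: BT_iff)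
  have "fst Y + snd Y - l = fst X"
    using l assms unfolding wing_def by (intro cong_small_eq[of _ _ n]) auto
  then show "fst Y \<le> fst X \<and> fst X \<le> fst Y + snd Y - 1 \<and> fst Y + snd Y - fst X \<le> snd X" using l by linarith
next
  assume h: "fst Y \<le> fst X \<and> fst X \<le> fst Y + snd Y - 1 \<and> fst Y + snd Y - fst X \<le> snd X"
  have "fst Y + snd Y - fst X \<in> BT n Y X" using h by (auto simp: BT_iff)
  then show "BT n Y X \<noteq> {}" by auto
qed

lemma RD_common:
  assumes "n > 0" "wing n Y" "wing n Z" "BD n Y X \<noteq> {}" "BD n Z X \<noteq> {}"
  shows "\<exists>p. fst Y \<le> p \<and> p \<le> fst Y + snd Y - 1 \<and> fst Z \<le> p \<and> p \<le> fst Z + snd Z - 1"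
proof -
  obtain l where "l \<in> BD n Y X" using assms(4) by auto
  then have l: "1 \<le> l" "l \<le> snd X" "l \<le> snd Y" "[fst X + 2 + snd X - l = fst Y] (mod int n)"
    using BD_iff[OF assms(1)] by auto
  obtain m where "m \<in> BD n Z X" using assms(5) by auto
  then have m: "1 \<le> m" "m \<le> snd X" "m \<le> snd Z" "[fst X + 2 + snd X - m = fst Z] (mod int n)"
    using BD_iff[OF assms(1)] by auto
  have d1: "int n dvd (fst X + 2 + snd X - l - fst Y)" using l(4) by (simp add: cong_iff_dvd_diff)
  have d2: "int n dvd (fst X + 2 + snd X - m - fst Z)" using m(4) by (simp add: cong_iff_dvd_diff)
  have "int n dvd ((fst X + 2 + snd X - m - fst Z) - (fst X + 2 + snd X - l - fst Y))"
    using d1 d2 by (rule dvd_diff[rotated])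
  moreover have "(fst X + 2 + snd X - m - fst Z) - (fst X + 2 + snd X - l - fst Y) = (fst Y + l) - (fst Z + m)" by simp
  ultimately have "[fst Y + l = fst Z + m] (mod int n)" by (simp add: cong_iff_dvd_diff)
  then have "fst Y + l = fst Z + m"
    using l m assms(2,3) unfolding wing_def by (intro cong_small_eq[of _ _ n]) auto
  then show ?thesis using l m by (intro exI[of _ "fst Y + l - 1"]) auto
qed

lemma RD_G:
  assumes "n > 0" "wing n Y" "1 \<le> fst X" "1 \<le> snd X" "fst X + snd X \<le> int n - 1"
  shows "BD n Y X \<noteq> {} \<longleftrightarrow> fst X + 2 \<le> fst Y \<and> fst Y \<le> fst X + snd X + 1 \<and> fst X + snd X + 1 \<le> fst Y + snd Y - 1"
proof
  assume "BD n Y X \<noteq> {}"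
  then obtain l where "l \<in> BD n Y X" by auto
  then have l: "1 \<le> l" "l \<le> snd X" "l \<le> snd Y" "[fst X + 2 + snd X - l = fst Y] (mod int n)"
    using BD_iff[OF assms(1)] by auto
  have "fst X + 2 + snd X - l = fst Y"
    using l assms unfolding wing_def by (intro cong_small_eq[of _ _ n]) auto
  then show "fst X + 2 \<le> fst Y \<and> fst Y \<le> fst X + snd X + 1 \<and> fst X + snd X + 1 \<le> fst Y + snd Y - 1"
    using l by linarith
next
  assume h: "fst X + 2 \<le> fst Y \<and> fst Y \<le> fst X + snd X + 1 \<and> fst X + snd X + 1 \<le> fst Y + snd Y - 1"
  have "fst X + snd X + 2 - fst Y \<in> BD n Y X" using h BD_iff[OF assms(1)] by auto
  then show "BD n Y X \<noteq> {}" by auto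
qed

lemma RD_mono:
  assumes "n > 0" "fst Y = fst Z" "snd Y \<le> snd Z" "BD n Y X \<noteq> {}"
  shows "BD n Z X \<noteq> {}"
proof -
  obtain l where "l \<in> BD n Y X" using assms(4) by auto
  then have "l \<in> BD n Z X" using assms BD_iff[OF assms(1)] by auto
  then show ?thesis by auto
qed

lemma RT_mono:
  assumes "fst Y + snd Y = fst Z + snd Z" "snd Y \<le> snd Z" "BT n Y X \<noteq> {}"
  shows "BT n Z X \<noteq> {}"
proof -
  obtain l where "l \<in> BT n Y X" using assms(3) by auto
  then have "l \<in> BT n Z X" using assms by (auto simp: BT_iff)
  then show ?thesis by auto
qed


definition eT :: "int \<Rightarrow> ('k::field) mor" where
  "eT l = (\<lambda>x. if x = l then 1 else 0, \<lambda>_. 0)"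
definition eD :: "int \<Rightarrow> ('k::field) mor" where
  "eD q = (\<lambda>_. 0, \<lambda>x. if x = q then 1 else 0)"

definition idx :: "arrow \<Rightarrow> int" where "idx a = snd (snd (snd a))"

lemma bmor_eq: "bmor a = (case akind a of TK \<Rightarrow> eT (idx a) | DK \<Rightarrow> eD (idx a))"
  unfolding bmor_def eT_def eD_def idx_def by (cases "akind a") auto

lemma fst_eT [simp]: "fst (eT l) x = (if x = l then 1 else 0)" by (simp add: eT_def)
lemma snd_eT [simp]: "snd (eT l) x = 0" by (simp add: eT_def)
lemma fst_eD [simp]: "fst (eD l) x = 0" by (simp add: eD_def)
lemma snd_eD [simp]: "snd (eD l) x = (if x = l then 1 else 0)" by (simp add: eD_def)

lemma fst_comp: "fst (comp n X Y Z g f) r = (\<Sum>l\<in>BT n X Y. \<Sum>m\<in>BT n Y Z.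
            if l + m - snd Y = r \<and> 1 \<le> r then fst f l * fst g m else 0)"
  unfolding comp_def by simp
lemma snd_comp: "snd (comp n X Y Z g f) s = (\<Sum>m\<in>BT n X Y. \<Sum>q\<in>BD n Y Z.
            if s = q - m + snd X \<and> s \<in> BD n X Z then fst f m * snd g q else 0)
        + (\<Sum>q\<in>BD n X Y. \<Sum>m\<in>BT n Y Z.
            if s = q - m + snd Z \<and> s \<in> BD n X Z then snd f q * fst g m else 0)"
  unfolding comp_def by simp

lemma finite_BT: "finite (BT n X Y)"
  by (rule finite_subset[of _ "{1..snd X}"]) (auto simp: BT_def)

lemma finite_BD: "finite (BD n X Y)"
  unfolding BD_def by (rule finite_BT)

lemma sum_sum_delta:
  assumes "finite A" "finite B"
  shows "(\<Sum>x\<in>A. \<Sum>y\<in>B. if x = a \<and> y = b then c x y else 0) = (if a \<in> A \<and> b \<in> B then c a b else (0::'a::comm_monoid_add))"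
proof -
  have "(\<Sum>y\<in>B. if x = a \<and> y = b then c x y else 0) = (if x = a then (if b \<in> B then c x b else 0) else 0)" for x
    using assms(2) by (cases "x = a") simp_all
  then have "(\<Sum>x\<in>A. \<Sum>y\<in>B. if x = a \<and> y = b then c x y else 0) = (\<Sum>x\<in>A. if x = a then (if b \<in> B then c x b else 0) else 0)"
    by simp
  also have "\<dots> = (if a \<in> A \<and> b \<in> B then c a b else 0)" using assms(1) by simp
  finally show ?thesis .
qed

lemma sum_delta_conj:
  assumes "finite A"
  shows "(\<Sum>q\<in>A. if s = q \<and> P then F q else 0) = (if s \<in> A \<and> P then F s else (0::'a::comm_monoid_add))"
proof -
  have "(\<Sum>q\<in>A. if s = q \<and> P then F q else 0) = (\<Sum>q\<in>A. if s = q then (if P then F q else 0) else 0)"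
    by (rule sum.cong) auto
  also have "\<dots> = (if s \<in> A \<and> P then F s else 0)" using assms by simp
  finally show ?thesis .
qed

lemma comp_eT_eT:
  assumes "l \<in> BT n X Y" "m \<in> BT n Y Z"
  shows "comp n X Y Z (eT m) (eT l) = (if 1 \<le> l + m - snd Y then eT (l + m - snd Y) else (zmor::'k::field mor))"
proof -
  have f: "fst (comp n X Y Z (eT m) (eT l)) r = (if l + m - snd Y = r \<and> 1 \<le> r then 1 else (0::'k))" for r
  proof -
    have "fst (comp n X Y Z (eT m) (eT l)) r = (\<Sum>l'\<in>BT n X Y. \<Sum>m'\<in>BT n Y Z. if l' = l \<and> m' = m then (if l + m - snd Y = r \<and> 1 \<le> r then 1 else 0) else (0::'k))"
      unfolding fst_comp by (intro sum.cong refl) auto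
    also have "\<dots> = (if l + m - snd Y = r \<and> 1 \<le> r then 1 else 0)"
      using assms by (simp add: sum_sum_delta finite_BT)
    finally show ?thesis .
  qed
  have s: "snd (comp n X Y Z (eT m) (eT l)) r = (0::'k)" for r
    unfolding snd_comp by (simp cong: if_cong)
  show ?thesis
  proof (cases "1 \<le> l + m - snd Y")
    case True
    then show ?thesis by (intro prod_eqI) (auto simp: f s fun_eq_iff)
  next
    case False
    then show ?thesis by (intro prod_eqI) (auto simp: f s zmor_def fun_eq_iff)
  qed
qed

lemma comp_eD_eT:
  assumes "l \<in> BT n X Y" "q \<in> BD n Y Z"
  shows "comp n X Y Z (eD q) (eT l) = (if q - l + snd X \<in> BD n X Z then eD (q - l + snd X) else (zmor::'k::field mor))"
proof -
  have f: "fst (comp n X Y Z (eD q) (eT l)) r = (0::'k)" for r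
    unfolding fst_comp by (simp cong: if_cong)
  have s: "snd (comp n X Y Z (eD q) (eT l)) s = (if s = q - l + snd X \<and> s \<in> BD n X Z then 1 else (0::'k))" for s
  proof -
    have z: "(\<Sum>qa\<in>BD n X Y. \<Sum>ma\<in>BT n Y Z. if s = qa - ma + snd Z \<and> s \<in> BD n X Z
          then snd (eT l) qa * fst (eD q) ma else (0::'k)) = 0" by (simp cong: if_cong)
    have m: "(\<Sum>ma\<in>BT n X Y. \<Sum>qa\<in>BD n Y Z. if s = qa - ma + snd X \<and> s \<in> BD n X Z
          then fst (eT l) ma * snd (eD q) qa else (0::'k)) = (\<Sum>m'\<in>BT n X Y. \<Sum>q'\<in>BD n Y Z. if m' = l \<and> q' = q then (if s = q - l + snd X \<and> s \<in> BD n X Z then 1 else 0) else (0::'k))"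
    proof -
      have pt: "(if s = qa - ma + snd X \<and> s \<in> BD n X Z then fst (eT l) ma * snd (eD q) qa else (0::'k)) =
         (if ma = l \<and> qa = q then (if s = q - l + snd X \<and> s \<in> BD n X Z then 1 else 0) else 0)" for ma qa
        by (cases "ma = l"; cases "qa = q") auto
      show ?thesis by (simp only: pt)
    qed
    have "snd (comp n X Y Z (eD q) (eT l)) s = (\<Sum>m'\<in>BT n X Y. \<Sum>q'\<in>BD n Y Z. if m' = l \<and> q' = q then (if s = q - l + snd X \<and> s \<in> BD n X Z then 1 else 0) else (0::'k))"
      unfolding snd_comp z m by simp
    also have "\<dots> = (if s = q - l + snd X \<and> s \<in> BD n X Z then 1 else 0)"
      using assms by (simp add: sum_sum_delta finite_BT finite_BD)
    finally show ?thesis .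
  qed
  show ?thesis
  proof (cases "q - l + snd X \<in> BD n X Z")
    case True
    then show ?thesis by (intro prod_eqI) (auto simp: f s fun_eq_iff)
  next
    case False
    then show ?thesis by (intro prod_eqI) (auto simp: f s zmor_def fun_eq_iff)
  qed
qed

lemma comp_eT_eD:
  assumes "q \<in> BD n X Y" "m \<in> BT n Y Z"
  shows "comp n X Y Z (eT m) (eD q) = (if q - m + snd Z \<in> BD n X Z then eD (q - m + snd Z) else (zmor::'k::field mor))"
proof -
  have f: "fst (comp n X Y Z (eT m) (eD q)) r = (0::'k)" for r
    unfolding fst_comp by (simp cong: if_cong)
  have s: "snd (comp n X Y Z (eT m) (eD q)) s = (if s = q - m + snd Z \<and> s \<in> BD n X Z then 1 else (0::'k))" for s
  proof -
    have z: "(\<Sum>ma\<in>BT n X Y. \<Sum>qa\<in>BD n Y Z. if s = qa - ma + snd X \<and> s \<in> BD n X Z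
          then fst (eD q) ma * snd (eT m) qa else (0::'k)) = 0" by (simp cong: if_cong)
    have m': "(\<Sum>qa\<in>BD n X Y. \<Sum>ma\<in>BT n Y Z. if s = qa - ma + snd Z \<and> s \<in> BD n X Z
          then snd (eD q) qa * fst (eT m) ma else (0::'k)) = (\<Sum>q'\<in>BD n X Y. \<Sum>m'\<in>BT n Y Z. if q' = q \<and> m' = m then (if s = q - m + snd Z \<and> s \<in> BD n X Z then 1 else 0) else (0::'k))"
    proof -
      have pt: "(if s = qa - ma + snd Z \<and> s \<in> BD n X Z then snd (eD q) qa * fst (eT m) ma else (0::'k)) =
         (if qa = q \<and> ma = m then (if s = q - m + snd Z \<and> s \<in> BD n X Z then 1 else 0) else 0)" for ma qa
        by (cases "ma = m"; cases "qa = q") auto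
      show ?thesis by (simp only: pt)
    qed
    have "snd (comp n X Y Z (eT m) (eD q)) s = (\<Sum>q'\<in>BD n X Y. \<Sum>m'\<in>BT n Y Z. if q' = q \<and> m' = m then (if s = q - m + snd Z \<and> s \<in> BD n X Z then 1 else 0) else (0::'k))"
      unfolding snd_comp z m' by simp
    also have "\<dots> = (if s = q - m + snd Z \<and> s \<in> BD n X Z then 1 else 0)"
      using assms by (simp add: sum_sum_delta finite_BT finite_BD)
    finally show ?thesis .
  qed
  show ?thesis
  proof (cases "q - m + snd Z \<in> BD n X Z")
    case True
    then show ?thesis by (intro prod_eqI) (auto simp: f s fun_eq_iff)
  next
    case False
    then show ?thesis by (intro prod_eqI) (auto simp: f s zmor_def fun_eq_iff)
  qed
qed


lemma morph_fst: "f \<in> morph K n X Y \<Longrightarrow> l \<notin> BT n X Y \<Longrightarrow> fst f l = 0"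
  unfolding morph_def by auto
lemma morph_snd: "f \<in> morph K n X Y \<Longrightarrow> q \<notin> BD n X Y \<Longrightarrow> snd f q = 0"
  unfolding morph_def by auto

lemma eT_morph: "l \<in> BT n X Y \<Longrightarrow> (eT l :: 'k::field mor) \<in> morph K n X Y"
  unfolding morph_def by auto
lemma eD_morph: "q \<in> BD n X Y \<Longrightarrow> (eD q :: 'k::field mor) \<in> morph K n X Y"
  unfolding morph_def by auto

lemma fst_idm: "fst (idm X :: 'k::field mor) (snd X) = 1"
  unfolding idm_def by simp

lemma eD_rad:
  assumes "q \<in> BD n X Y"
  shows "(eD q :: 'k::field mor) \<in> rad K n X Y"
proof -
  have "\<not> iso K n X Y (eD q)"
  proof
    assume "iso K n X Y (eD q)"
    then obtain g where g: "comp n X Y X g (eD q) = (idm X :: 'k mor)" unfolding iso_def by blast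
    have "fst (comp n X Y X g (eD q)) (snd X) = (0::'k)"
      unfolding fst_comp by (simp cong: if_cong)
    then show False using g fst_idm[of X, where 'k='k] by simp
  qed
  then show ?thesis unfolding rad_def using eD_morph[OF assms] by auto
qed

lemma eT_rad:
  assumes "n > 0" "wing n X" "wing n Y" "l \<in> BT n X Y" "\<not> (X = Y \<and> l = snd X)"
  shows "(eT l :: 'k::field mor) \<in> rad K n X Y"
proof -
  have e: "BT n Y X = {}"
  proof (rule ccontr)
    assume "BT n Y X \<noteq> {}"
    then obtain m where m: "m \<in> BT n Y X" by auto
    have a: "l = fst X + snd X - fst Y \<and> fst X \<le> fst Y \<and> fst Y \<le> fst X + snd X - 1 \<and> fst X + snd X \<le> fst Y + snd Y"
      using BT_wing[OF assms(1,2,3)] assms(4) by blast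
    have b: "fst Y \<le> fst X \<and> fst Y + snd Y \<le> fst X + snd X"
      using BT_wing[OF assms(1,3,2)] m by blast
    have "X = Y" using a b by (intro prod_eqI) auto
    moreover have "l = snd X" using a b by auto
    ultimately show False using assms(5) by blast
  qed
  have "\<not> iso K n X Y (eT l)"
  proof
    assume "iso K n X Y (eT l)"
    then obtain g where g: "comp n X Y X g (eT l) = (idm X :: 'k mor)" unfolding iso_def by blast
    have "fst (comp n X Y X g (eT l)) (snd X) = (0::'k)"
      unfolding fst_comp e by simp
    then show False using g fst_idm[of X, where 'k='k] by simp
  qed
  then show ?thesis unfolding rad_def using eT_morph[OF assms(4)] by auto
qed

lemma BTYY:
  assumes "n > 0" "wing n Y"
  shows "BT n Y Y = {snd Y}"
  using BT_wing[OF assms(1,2,2)] assms(2) unfolding wing_def by auto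

lemma rad_endo:
  assumes "n > 0" "wing n Y" "h \<in> rad (K::'k::field itself) n Y Y"
  shows "fst h (snd Y) = 0"
proof (rule ccontr)
  define c0 where "c0 = fst h (snd Y)"
  assume "fst h (snd Y) \<noteq> 0"
  then have c0: "c0 \<noteq> 0" unfolding c0_def by simp
  have hm: "h \<in> morph K n Y Y" using assms(3) unfolding rad_def by auto
  have B: "BT n Y Y = {snd Y}" using BTYY[OF assms(1,2)] .
  have b1: "1 \<le> snd Y" using assms(2) unfolding wing_def by simp
  define g :: "'k mor" where
    "g = (\<lambda>x. if x = snd Y then inverse c0 else 0, \<lambda>q. if q \<in> BD n Y Y then - snd h q * inverse (c0 * c0) else 0)"
  have gm: "g \<in> morph K n Y Y" unfolding morph_def g_def using B by auto
  have gf: "fst g (snd Y) = inverse c0" unfolding g_def by simp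
  have hf: "fst h (snd Y) = c0" unfolding c0_def by simp
  have hs: "snd h q = 0" if "q \<notin> BD n Y Y" for q using morph_snd[OF hm that] .
  have c1: "comp n Y Y Y g h = idm Y"
  proof (rule prod_eqI)
    show "fst (comp n Y Y Y g h) = fst (idm Y)"
    proof
      fix r
      show "fst (comp n Y Y Y g h) r = fst (idm Y) r"
        unfolding fst_comp B using b1 c0 by (auto simp: idm_def g_def c0_def)
    qed
    show "snd (comp n Y Y Y g h) = snd (idm Y)"
    proof
      fix s
      have "snd (comp n Y Y Y g h) s = (\<Sum>q\<in>BD n Y Y. if s = q \<and> s \<in> BD n Y Y then c0 * snd g q else 0)
           + (\<Sum>q\<in>BD n Y Y. if s = q \<and> s \<in> BD n Y Y then snd h q * inverse c0 else 0)"
        unfolding snd_comp B by (simp add: gf hf cong: if_cong)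
      also have "\<dots> = (if s \<in> BD n Y Y then c0 * snd g s + snd h s * inverse c0 else 0)"
        by (simp add: sum_delta_conj finite_BD)
      also have "\<dots> = 0" using c0 by (simp add: g_def field_simps)
      finally show "snd (comp n Y Y Y g h) s = snd (idm Y) s" by (simp add: idm_def)
    qed
  qed
  have c2: "comp n Y Y Y h g = idm Y"
  proof (rule prod_eqI)
    show "fst (comp n Y Y Y h g) = fst (idm Y)"
    proof
      fix r
      show "fst (comp n Y Y Y h g) r = fst (idm Y) r"
        unfolding fst_comp B using b1 c0 by (auto simp: idm_def g_def c0_def)
    qed
    show "snd (comp n Y Y Y h g) = snd (idm Y)"
    proof
      fix s
      have "snd (comp n Y Y Y h g) s = (\<Sum>q\<in>BD n Y Y. if s = q \<and> s \<in> BD n Y Y then inverse c0 * snd h q else 0)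
           + (\<Sum>q\<in>BD n Y Y. if s = q \<and> s \<in> BD n Y Y then snd g q * c0 else 0)"
        unfolding snd_comp B by (simp add: gf hf cong: if_cong)
      also have "\<dots> = (if s \<in> BD n Y Y then inverse c0 * snd h s + snd g s * c0 else 0)"
        by (simp add: sum_delta_conj finite_BD)
      also have "\<dots> = 0" using c0 by (simp add: g_def field_simps)
      finally show "snd (comp n Y Y Y h g) s = snd (idm Y) s" by (simp add: idm_def)
    qed
  qed
  have "iso K n Y Y h" unfolding iso_def using hm gm c1 c2 by blast
  then show False using assms(3) unfolding rad_def by auto
qed

lemma rad2_snd_zero:
  assumes "\<And>m h g. m \<in> {1..n-1} \<Longrightarrow> h \<in> rad K n X (T m) \<Longrightarrow> g \<in> rad K n (T m) Y \<Longrightarrow> snd (comp n X (T m) Y g h) x = 0"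
    and "r \<in> rad2 K n T X Y"
  shows "snd r x = 0"
  using assms(2)
proof (induction rule: rad2.induct)
  case zero
  then show ?case by (simp add: zmor_def)
next
  case (add m h g r)
  then show ?case using assms(1)[of m h g] by (simp add: madd_def)
qed


definition cfg :: "nat \<Rightarrow> (nat \<Rightarrow> obj) \<Rightarrow> bool" where
  "cfg n T \<longleftrightarrow> n \<ge> 2 \<and> inj_on T {1..n-1} \<and> max_rigid n (T ` {1..n-1}) \<and> T 1 = (1, int n - 1)"

lemma cfg_n: "cfg n T \<Longrightarrow> n > 0" unfolding cfg_def by auto

lemma wing_valid: "wing n Y \<Longrightarrow> valid n Y"
  unfolding wing_def valid_def by auto

lemma member_wing:
  assumes "cfg n T" "k \<in> {1..n-1}"
  shows "wing n (T k)"
proof -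
  have n: "n > 0" "n \<ge> 2" using assms(1) unfolding cfg_def by auto
  have mr: "max_rigid n (T ` {1..n-1})" using assms(1) unfolding cfg_def by auto
  have T1: "T 1 = (1, int n - 1)" using assms(1) unfolding cfg_def by auto
  have one: "(1::nat) \<in> {1..n-1}" using n by auto
  have v: "valid n (T k)" using mr assms(2) unfolding max_rigid_def by auto
  have r1: "\<not> ext1_nz n (T k) (T k)" using mr assms(2) unfolding max_rigid_def rigid_def by auto
  have r2: "\<not> ext1_nz n (T 1) (T k)" using mr assms(2) one unfolding max_rigid_def rigid_def by blast
  define a where "a = fst (T k)"
  define b where "b = snd (T k)"
  have ab: "1 \<le> a" "a \<le> int n" "1 \<le> b" using v unfolding valid_def a_def b_def by auto
  have bn: "b \<le> int n - 1"
  proof (rule ccontr)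
    assume "\<not> b \<le> int n - 1"
    then have bb: "b \<ge> int n" by simp
    define l where "l = b mod int n + 1"
    have "b mod int n < int n" using n by simp
    moreover have "0 \<le> b mod int n" using n by simp
    ultimately have l1: "1 \<le> l" "l \<le> int n" unfolding l_def by auto
    have "int n dvd ((a + b - l) - (a - 1))"
    proof -
      have "(a + b - l) - (a - 1) = int n * (b div int n)" unfolding l_def
        by (metis add_diff_cancel_left' diff_add_cancel diff_diff_eq2 minus_mod_eq_mult_div)
      then show ?thesis by simp
    qed
    then have "[a + b - l = a - 1] (mod int n)" by (simp add: cong_iff_dvd_diff)
    then have "ext1_nz n (T k) (T k)"
      unfolding ext1_iff[OF n(1)] using l1 bb unfolding a_def b_def by (intro exI[of _ l]) auto
    then show False using r1 by simp
  qed
  have abn: "a + b \<le> int n"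
  proof (rule ccontr)
    assume h: "\<not> a + b \<le> int n"
    define l where "l = int n + 1 - a"
    have "a \<ge> 2" using h bn by linarith
    then have l1: "1 \<le> l" "l \<le> int n - 1" "l \<le> b" using h ab unfolding l_def by auto
    have "[fst (T 1) + snd (T 1) - l = fst (T k) - 1] (mod int n)"
      unfolding T1 a_def[symmetric] l_def by simp
    then have "ext1_nz n (T 1) (T k)"
      unfolding ext1_iff[OF n(1)] using l1 T1 unfolding b_def by (intro exI[of _ l]) auto
    then show False using r2 by simp
  qed
  show ?thesis unfolding wing_def using ab abn unfolding a_def b_def by simp
qed

lemma member_compat:
  assumes "cfg n T" "k \<in> {1..n-1}" "k' \<in> {1..n-1}"
  shows "\<not> cross (T k) (T k')"
proof -
  have n: "n > 0" using cfg_n assms(1) .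
  have mr: "max_rigid n (T ` {1..n-1})" using assms(1) unfolding cfg_def by auto
  have "\<not> ext1_nz n (T k) (T k')" using mr assms(2,3) unfolding max_rigid_def rigid_def by blast
  then show ?thesis using ext_wing[OF n member_wing[OF assms(1,2)] member_wing[OF assms(1,3)]] by blast
qed

lemma maximal_use:
  assumes "cfg n T" "wing n K" "\<And>k. k \<in> {1..n-1} \<Longrightarrow> \<not> cross K (T k) \<and> \<not> cross (T k) K"
  shows "\<exists>m\<in>{1..n-1}. T m = K"
proof -
  have n: "n > 0" using cfg_n assms(1) .
  have mr: "max_rigid n (T ` {1..n-1})" using assms(1) unfolding cfg_def by auto
  have rS: "rigid n (T ` {1..n-1})" using mr unfolding max_rigid_def by auto
  have "rigid n (T ` {1..n-1} \<union> {K})"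
    unfolding rigid_def
  proof (intro ballI)
    fix Y Z assume Y: "Y \<in> T ` {1..n-1} \<union> {K}" and Z: "Z \<in> T ` {1..n-1} \<union> {K}"
    show "\<not> ext1_nz n Y Z"
    proof (cases "Y = K")
      case True
      show ?thesis
      proof (cases "Z = K")
        case True
        then show ?thesis using \<open>Y = K\<close> ext_wing[OF n assms(2) assms(2)] unfolding cross_def by auto
      next
        case False
        then obtain k where k: "k \<in> {1..n-1}" "Z = T k" using Z by auto
        then show ?thesis using True ext_wing[OF n assms(2) member_wing[OF assms(1) k(1)]] assms(3)[OF k(1)] by auto
      qed
    next
      case False
      then obtain k where k: "k \<in> {1..n-1}" "Y = T k" using Y by auto
      show ?thesis
      proof (cases "Z = K")
        case True
        then show ?thesis using k ext_wing[OF n member_wing[OF assms(1) k(1)] assms(2)] assms(3)[OF k(1)] by auto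
      next
        case False
        then have "Z \<in> T ` {1..n-1}" using Z by auto
        then show ?thesis using rS k unfolding rigid_def by auto
      qed
    qed
  qed
  moreover have "valid n K" using wing_valid[OF assms(2)] .
  ultimately have "{K} \<subseteq> T ` {1..n-1}" using mr unfolding max_rigid_def by blast
  then show ?thesis by auto
qed

lemma top_one:
  assumes "cfg n T" "k \<in> {1..n-1}" "snd (T k) \<ge> int n - 1"
  shows "k = 1"
proof -
  have w: "wing n (T k)" using member_wing[OF assms(1,2)] .
  have T1: "T 1 = (1, int n - 1)" and inj: "inj_on T {1..n-1}" and n2: "n \<ge> 2" using assms(1) unfolding cfg_def by auto
  have "T k = T 1" using w assms(3) T1 unfolding wing_def by (intro prod_eqI) auto
  moreover have "(1::nat) \<in> {1..n-1}" using n2 by auto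
  ultimately show ?thesis using inj assms(2) unfolding inj_on_def by blast
qed

lemma nested_sub:
  assumes "\<not> cross Y Z" "\<not> cross Z Y"
    "fst Y \<le> p" "p \<le> fst Y + snd Y - 1" "fst Z \<le> p" "p \<le> fst Z + snd Z - 1" "snd Y \<le> snd Z"
  shows "fst Z \<le> fst Y \<and> fst Y + snd Y \<le> fst Z + snd Z"
  using assms unfolding cross_def by linarith


lemma mem_RT: "cfg n T \<Longrightarrow> k \<in> {1..n-1} \<Longrightarrow> T k \<in> RT n X \<longleftrightarrow> BT n (T k) X \<noteq> {}"
  unfolding RT_def using member_wing wing_valid by blast
lemma mem_RD: "cfg n T \<Longrightarrow> k \<in> {1..n-1} \<Longrightarrow> T k \<in> RD n X \<longleftrightarrow> BD n (T k) X \<noteq> {}"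
  unfolding RD_def using member_wing wing_valid by blast

lemma K_compat:
  fixes A B M :: obj and c d :: int
  assumes A: "fst A \<le> c" "c \<le> fst A + snd A - 1" "fst A + snd A - c \<le> d"
    and B: "c + 2 \<le> fst B" "fst B \<le> c + d + 1" "c + d + 1 \<le> fst B + snd B - 1"
    and gap: "fst B > fst A + snd A + 1"
    and M: "1 \<le> snd M"
    and cMA: "\<not> cross M A" "\<not> cross A M" and cMB: "\<not> cross M B" "\<not> cross B M"
    and tRT: "fst M \<le> c \<and> c \<le> fst M + snd M - 1 \<and> fst M + snd M - c \<le> d \<Longrightarrow> snd M \<le> snd A"
    and tRD: "c + 2 \<le> fst M \<and> fst M \<le> c + d + 1 \<and> c + d + 1 \<le> fst M + snd M - 1 \<Longrightarrow> snd M \<le> snd B"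
  shows "\<not> cross (fst A + snd A + 1, fst B + snd B - fst A - snd A - 1) M \<and>
         \<not> cross M (fst A + snd A + 1, fst B + snd B - fst A - snd A - 1)"
proof
  show "\<not> cross (fst A + snd A + 1, fst B + snd B - fst A - snd A - 1) M"
  proof
    assume h: "cross (fst A + snd A + 1, fst B + snd B - fst A - snd A - 1) M"
    then have h1: "fst A + snd A + 1 < fst M" "fst M \<le> fst B + snd B" "fst B + snd B \<le> fst M + snd M - 1"
      unfolding cross_def by auto
    show False
    proof (cases "fst M > fst B")
      case True
      then have "cross B M" using h1 unfolding cross_def by auto
      then show False using cMB by simp
    next
      case False
      then have "snd M \<le> snd B" using h1 A B by (intro tRD) linarith
      then show False using False h1 by linarith
    qed
  qed
  show "\<not> cross M (fst A + snd A + 1, fst B + snd B - fst A - snd A - 1)"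
  proof
    assume h: "cross M (fst A + snd A + 1, fst B + snd B - fst A - snd A - 1)"
    then have h1: "fst M < fst A + snd A + 1" "fst A + snd A + 1 \<le> fst M + snd M" "fst M + snd M \<le> fst B + snd B - 1"
      unfolding cross_def by auto
    show False
    proof (cases "fst M > fst A")
      case True
      then have "cross A M" using h1 unfolding cross_def by auto
      then show False using cMA by simp
    next
      case False
      show False
      proof (cases "fst B \<le> fst M + snd M")
        case True
        then have "cross M B" using h1 False A B unfolding cross_def by auto
        then show False using cMB by simp
      next
        case False2: False
        then have "snd M \<le> snd A" using h1 False A B by (intro tRT) linarith
        then show False using False h1 by linarith
      qed
    qed
  qed
qed

lemma R2:
  assumes cf: "cfg n T" and vX: "valid n X" and ti: "is_top n T (RT n X) i" and tj: "is_top n T (RD n X) j"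
  shows "[fst (T i) + snd (T i) + 1 = fst (T j)] (mod int n)"
proof -
  have n: "n > 0" using cfg_n[OF cf] .
  have T1: "T 1 = (1, int n - 1)" and n2: "n \<ge> 2" using cf unfolding cfg_def by auto
  have one: "(1::nat) \<in> {1..n-1}" using n2 by auto
  define c where "c = fst X"
  define d where "d = snd X"
  have cd: "1 \<le> c" "c \<le> int n" "1 \<le> d" using vX unfolding valid_def c_def d_def by auto
  have i: "i \<in> {1..n-1}" "T i \<in> RT n X" "\<And>k. k \<in> {1..n-1} \<Longrightarrow> T k \<in> RT n X \<Longrightarrow> snd (T k) \<le> snd (T i)"
    using ti unfolding is_top_def by auto
  have j: "j \<in> {1..n-1}" "T j \<in> RD n X" "\<And>k. k \<in> {1..n-1} \<Longrightarrow> T k \<in> RD n X \<Longrightarrow> snd (T k) \<le> snd (T j)"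
    using tj unfolding is_top_def by auto
  define A where "A = T i"
  define B where "B = T j"
  have wA: "wing n A" and wB: "wing n B" unfolding A_def B_def using member_wing[OF cf] i(1) j(1) by auto
  have Arel: "fst A \<le> c" "c \<le> fst A + snd A - 1" "fst A + snd A - c \<le> d"
    using RT_wing[OF n wA, of X] cd i(2) mem_RT[OF cf i(1)] unfolding A_def c_def d_def by auto
  obtain l' where l': "1 \<le> l'" "l' \<le> snd B" "l' \<le> d" "[c + 2 + d - l' = fst B] (mod int n)"
  proof -
    have "BD n B X \<noteq> {}" using j(2) mem_RD[OF cf j(1)] unfolding B_def by auto
    then obtain l where "l \<in> BD n B X" by auto
    then show ?thesis using that BD_iff[OF n] unfolding c_def d_def by auto
  qed
  show ?thesis
  proof (cases "c + d \<ge> int n")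
    case True
    have w1: "wing n (T 1)" using member_wing[OF cf one] .
    have "BT n (T 1) X \<noteq> {}"
      using RT_wing[OF n w1, of X] cd True Arel wA unfolding T1 c_def d_def wing_def by auto
    then have "snd (T 1) \<le> snd (T i)" using i(3)[OF one] mem_RT[OF cf one] by auto
    then have i1: "i = 1" using top_one[OF cf i(1)] T1 by simp
    define l where "l = (c + d) mod int n + 1"
    have m0: "0 \<le> (c + d) mod int n" "(c + d) mod int n < int n" using n by auto
    have dv: "(c + d) - (c + d) mod int n = int n * ((c + d) div int n)"
      by (simp add: minus_mod_eq_mult_div)
    have lc: "[c + 2 + d - l = 1] (mod int n)"
    proof -
      have "c + 2 + d - l - 1 = int n * ((c + d) div int n)" using dv unfolding l_def by simp
      then show ?thesis by (simp add: cong_iff_dvd_diff)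
    qed
    have lN: "l \<le> int n - 1"
    proof (rule ccontr)
      assume "\<not> l \<le> int n - 1"
      then have e: "(c + d) mod int n = int n - 1" using m0 unfolding l_def by simp
      have d1: "int n dvd (c + d + 1)"
      proof -
        have "c + d + 1 = int n * ((c + d) div int n) + int n" using dv e by simp
        then show ?thesis by simp
      qed
      have d2: "int n dvd (c + 2 + d - l' - fst B)" using l'(4) by (simp add: cong_iff_dvd_diff)
      have "int n dvd ((c + d + 1) - (c + 2 + d - l' - fst B))" using d1 d2 by (rule dvd_diff)
      moreover have "(c + d + 1) - (c + 2 + d - l' - fst B) = fst B + l' - 1" by simp
      ultimately have "[fst B + l' - 1 = 0] (mod int n)" by (simp add: cong_iff_dvd_diff)
      then have "fst B + l' - 1 = 0" using wB l' unfolding wing_def by (intro cong_small_eq[of _ _ n]) auto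
      then show False using wB l' unfolding wing_def by simp
    qed
    have ld: "l \<le> d"
    proof (cases "d \<ge> int n")
      case True
      then show ?thesis using m0 unfolding l_def by simp
    next
      case False
      have "(c + d) mod int n = (c + d - int n) mod int n"
        by (simp add: mod_diff_right_eq[symmetric])
      also have "\<dots> = c + d - int n" using True False cd Arel wA unfolding wing_def
        by (intro mod_pos_pos_trivial) auto
      finally show ?thesis using Arel wA unfolding l_def wing_def by simp
    qed
    have "l \<in> BD n (T 1) X"
      using BD_iff[OF n] lc lN ld m0 T1 unfolding l_def c_def d_def by auto
    then have "BD n (T 1) X \<noteq> {}" by auto
    then have "snd (T 1) \<le> snd (T j)" using j(3)[OF one] mem_RD[OF cf one] by auto
    then have j1: "j = 1" using top_one[OF cf j(1)] T1 by simp
    show ?thesis unfolding i1 j1 T1 by (simp add: cong_def)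
  next
    case False
    have cd2: "c + d \<le> int n - 1" using False by simp
    have Brel: "c + 2 \<le> fst B" "fst B \<le> c + d + 1" "c + d + 1 \<le> fst B + snd B - 1"
      using RD_G[OF n wB, of X] cd cd2 j(2) mem_RD[OF cf j(1)] unfolding B_def c_def d_def by auto
    have nAB: "\<not> cross A B" unfolding A_def B_def using member_compat[OF cf i(1) j(1)] .
    have ge: "fst B \<ge> fst A + snd A + 1" using nAB Arel Brel unfolding cross_def by linarith
    have eq: "fst B = fst A + snd A + 1"
    proof (rule ccontr)
      assume "fst B \<noteq> fst A + snd A + 1"
      then have gap: "fst B > fst A + snd A + 1" using ge by simp
      define K where "K = (fst A + snd A + 1, fst B + snd B - fst A - snd A - 1)"
      have wK: "wing n K" unfolding K_def wing_def using Arel Brel wA wB unfolding wing_def by auto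
      have "\<not> cross K (T k) \<and> \<not> cross (T k) K" if k: "k \<in> {1..n-1}" for k
      proof -
        have wM: "wing n (T k)" using member_wing[OF cf k] .
        show ?thesis unfolding K_def
        proof (rule K_compat[OF Arel Brel gap])
          show "1 \<le> snd (T k)" using wM unfolding wing_def by simp
          show "\<not> cross (T k) A" "\<not> cross A (T k)" unfolding A_def using member_compat[OF cf] k i(1) by auto
          show "\<not> cross (T k) B" "\<not> cross B (T k)" unfolding B_def using member_compat[OF cf] k j(1) by auto
          show "snd (T k) \<le> snd A" if "fst (T k) \<le> c \<and> c \<le> fst (T k) + snd (T k) - 1 \<and> fst (T k) + snd (T k) - c \<le> d"
          proof -
            have "BT n (T k) X \<noteq> {}" using RT_wing[OF n wM, of X] cd that unfolding c_def d_def by auto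
            then show ?thesis using i(3)[OF k] mem_RT[OF cf k] unfolding A_def by auto
          qed
          show "snd (T k) \<le> snd B" if "c + 2 \<le> fst (T k) \<and> fst (T k) \<le> c + d + 1 \<and> c + d + 1 \<le> fst (T k) + snd (T k) - 1"
          proof -
            have "BD n (T k) X \<noteq> {}" using RD_G[OF n wM, of X] cd cd2 that unfolding c_def d_def by auto
            then show ?thesis using j(3)[OF k] mem_RD[OF cf k] unfolding B_def by auto
          qed
        qed
      qed
      then obtain m where m: "m \<in> {1..n-1}" "T m = K" using maximal_use[OF cf wK] by blast
      have "BD n K X \<noteq> {}" using RD_G[OF n wK, of X] cd cd2 Arel Brel unfolding K_def c_def d_def by auto
      then have "snd K \<le> snd B" using j(3)[OF m(1)] mem_RD[OF cf m(1)] m(2) unfolding B_def by auto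
      then show False using gap unfolding K_def by simp
    qed
    show ?thesis unfolding A_def[symmetric] B_def[symmetric] eq by simp
  qed
qed


lemma BD_members_one:
  assumes cf: "cfg n T" and k: "k \<in> {1..n-1}" and k': "k' \<in> {1..n-1}" and q: "q \<in> BD n (T k) (T k')"
  shows "q = 1"
proof -
  have n: "n > 0" using cfg_n[OF cf] .
  have w: "wing n (T k)" "wing n (T k')" using member_wing[OF cf] k k' by auto
  have b: "1 \<le> q" "q \<le> snd (T k')" "q \<le> snd (T k)" using q BD_iff[OF n] by auto
  have nc: "\<not> cross (T k') (T k)" using member_compat[OF cf k' k] .
  from BD_wing_cases[OF n w q] show ?thesis
  proof
    assume h: "fst (T k) = fst (T k') + snd (T k') + 2 - q"
    show "q = 1"
    proof (rule ccontr)
      assume "q \<noteq> 1"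
      then have "cross (T k') (T k)" using h b unfolding cross_def by auto
      then show False using nc by simp
    qed
  qed auto
qed

lemma bmor_beta: "bmor (i, j, DK, x) = eD x"
  by (simp add: bmor_eq akind_def idx_def)

lemma beta_arrow:
  assumes cf: "cfg n T" and vX: "valid n X" and ti: "is_top n T (RT n X) i" and tj: "is_top n T (RD n X) j"
  shows "is_arrow (K::'k::field itself) n T (i, j, DK, 1)"
proof -
  have n: "n > 0" using cfg_n[OF cf] .
  have i: "i \<in> {1..n-1}" "T i \<in> RT n X" "\<And>k. k \<in> {1..n-1} \<Longrightarrow> T k \<in> RT n X \<Longrightarrow> snd (T k) \<le> snd (T i)"
    using ti unfolding is_top_def by auto
  have j: "j \<in> {1..n-1}" "T j \<in> RD n X" "\<And>k. k \<in> {1..n-1} \<Longrightarrow> T k \<in> RD n X \<Longrightarrow> snd (T k) \<le> snd (T j)"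
    using tj unfolding is_top_def by auto
  have wi: "wing n (T i)" and wj: "wing n (T j)" using member_wing[OF cf] i(1) j(1) by auto
  have one: "1 \<in> BD n (T j) (T i)"
    using one_in_BD[OF n] R2[OF cf vX ti tj] wi wj unfolding wing_def by auto
  have rad: "(eD 1 :: 'k mor) \<in> rad K n (T j) (T i)" using eD_rad[OF one] .
  have z: "snd (comp n (T j) (T m) (T i) g h) 1 = (0::'k)"
    if m: "m \<in> {1..n-1}" and h: "h \<in> rad K n (T j) (T m)" and g: "g \<in> rad K n (T m) (T i)" for m h g
  proof -
    have wm: "wing n (T m)" using member_wing[OF cf m] .
    have s1: "(\<Sum>m'\<in>BT n (T j) (T m). \<Sum>q\<in>BD n (T m) (T i).
            if 1 = q - m' + snd (T j) \<and> 1 \<in> BD n (T j) (T i) then fst h m' * snd g q else 0) = (0::'k)"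
    proof (intro sum.neutral ballI)
      fix m' q assume m': "m' \<in> BT n (T j) (T m)" and q: "q \<in> BD n (T m) (T i)"
      show "(if 1 = q - m' + snd (T j) \<and> 1 \<in> BD n (T j) (T i) then fst h m' * snd g q else 0) = (0::'k)"
      proof (cases "1 = q - m' + snd (T j)")
        case True
        have q1: "q = 1" using BD_members_one[OF cf m i(1) q] .
        have bt: "m' = fst (T j) + snd (T j) - fst (T m) \<and> fst (T j) \<le> fst (T m) \<and> fst (T m) \<le> fst (T j) + snd (T j) - 1 \<and> fst (T j) + snd (T j) \<le> fst (T m) + snd (T m)"
          using BT_wing[OF n wj wm] m' by blast
        have fe: "fst (T m) = fst (T j)" using bt True q1 by simp
        have "BD n (T m) X \<noteq> {}"
          using RD_mono[OF n, of "T j" "T m" X] fe bt j(2) mem_RD[OF cf j(1)] by auto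
        then have "snd (T m) \<le> snd (T j)" using j(3)[OF m] mem_RD[OF cf m] by auto
        then have "T m = T j" using fe bt by (intro prod_eqI) auto
        then have "h \<in> rad K n (T j) (T j)" using h by simp
        then have "fst h (snd (T j)) = 0" using rad_endo[OF n wj] by blast
        moreover have "m' = snd (T j)" using True q1 by simp
        ultimately show ?thesis by simp
      qed simp
    qed
    have s2: "(\<Sum>q\<in>BD n (T j) (T m). \<Sum>m'\<in>BT n (T m) (T i).
            if 1 = q - m' + snd (T i) \<and> 1 \<in> BD n (T j) (T i) then snd h q * fst g m' else 0) = (0::'k)"
    proof (intro sum.neutral ballI)
      fix q m' assume q: "q \<in> BD n (T j) (T m)" and m': "m' \<in> BT n (T m) (T i)"
      show "(if 1 = q - m' + snd (T i) \<and> 1 \<in> BD n (T j) (T i) then snd h q * fst g m' else 0) = (0::'k)"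
      proof (cases "1 = q - m' + snd (T i)")
        case True
        have q1: "q = 1" using BD_members_one[OF cf j(1) m q] .
        have bt: "m' = fst (T m) + snd (T m) - fst (T i) \<and> fst (T m) \<le> fst (T i) \<and> fst (T i) \<le> fst (T m) + snd (T m) - 1 \<and> fst (T m) + snd (T m) \<le> fst (T i) + snd (T i)"
          using BT_wing[OF n wm wi] m' by blast
        have te: "fst (T m) + snd (T m) = fst (T i) + snd (T i)" using bt True q1 by simp
        have "BT n (T m) X \<noteq> {}"
          using RT_mono[of "T i" "T m" n X] te bt i(2) mem_RT[OF cf i(1)] by auto
        then have "snd (T m) \<le> snd (T i)" using i(3)[OF m] mem_RT[OF cf m] by auto
        then have "T m = T i" using te bt by (intro prod_eqI) auto
        then have "g \<in> rad K n (T i) (T i)" using g by simp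
        then have "fst g (snd (T i)) = 0" using rad_endo[OF n wi] by blast
        moreover have "m' = snd (T i)" using True q1 by simp
        ultimately show ?thesis by simp
      qed simp
    qed
    show ?thesis unfolding snd_comp s1 s2 by simp
  qed
  have "(eD 1 :: 'k mor) \<notin> rad2 K n T (T j) (T i)"
  proof
    assume "(eD 1 :: 'k mor) \<in> rad2 K n T (T j) (T i)"
    then have "snd (eD 1 :: 'k mor) 1 = 0" using rad2_snd_zero[where x=1] z by blast
    then show False by simp
  qed
  then show ?thesis unfolding is_arrow_def asrc_def atgt_def using i(1) j(1) rad
    by (simp add: bmor_beta)
qed


lemma RT_point:
  assumes cf: "cfg n T" and vX: "valid n X" and k: "k \<in> {1..n-1}" and m: "T k \<in> RT n X"
  shows "fst (T k) \<le> fst X \<and> fst X \<le> fst (T k) + snd (T k) - 1"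
proof -
  have n: "n > 0" using cfg_n[OF cf] .
  show ?thesis using RT_wing[OF n member_wing[OF cf k], of X] vX m mem_RT[OF cf k] unfolding valid_def by auto
qed

lemma RD_point:
  assumes cf: "cfg n T" and k: "k \<in> {1..n-1}" and k': "k' \<in> {1..n-1}" and m: "T k \<in> RD n X" "T k' \<in> RD n X"
  shows "\<exists>p. fst (T k) \<le> p \<and> p \<le> fst (T k) + snd (T k) - 1 \<and> fst (T k') \<le> p \<and> p \<le> fst (T k') + snd (T k') - 1"
  using RD_common[OF cfg_n[OF cf] member_wing[OF cf k] member_wing[OF cf k']] m mem_RD[OF cf k] mem_RD[OF cf k'] by auto

lemma RT_sub_top:
  assumes cf: "cfg n T" and vX: "valid n X" and ti: "is_top n T (RT n X) i" and k: "k \<in> {1..n-1}" and m: "T k \<in> RT n X"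
  shows "fst (T i) \<le> fst (T k) \<and> fst (T k) + snd (T k) \<le> fst (T i) + snd (T i)"
proof -
  have i: "i \<in> {1..n-1}" "T i \<in> RT n X" "snd (T k) \<le> snd (T i)" using ti k m unfolding is_top_def by auto
  show ?thesis
    using nested_sub[OF member_compat[OF cf k i(1)] member_compat[OF cf i(1) k]]
      RT_point[OF cf vX k m] RT_point[OF cf vX i(1,2)] i(3) by blast
qed

lemma RD_sub_top:
  assumes cf: "cfg n T" and tj: "is_top n T (RD n X) j" and k: "k \<in> {1..n-1}" and m: "T k \<in> RD n X"
  shows "fst (T j) \<le> fst (T k) \<and> fst (T k) + snd (T k) \<le> fst (T j) + snd (T j)"
proof -
  have j: "j \<in> {1..n-1}" "T j \<in> RD n X" "snd (T k) \<le> snd (T j)" using tj k m unfolding is_top_def by auto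
  obtain p where p: "fst (T k) \<le> p \<and> p \<le> fst (T k) + snd (T k) - 1 \<and> fst (T j) \<le> p \<and> p \<le> fst (T j) + snd (T j) - 1"
    using RD_point[OF cf k j(1) m j(2)] by blast
  show ?thesis
    using nested_sub[OF member_compat[OF cf k j(1)] member_compat[OF cf j(1) k]] p j(3) by blast
qed

lemma madd_zmor: "madd f zmor = f"
  unfolding madd_def zmor_def by simp

lemma no_wrap_D_arrow:
  assumes cf: "cfg n T" and p: "p \<in> {1..n-1}" and q: "q \<in> {1..n-1}" and pq: "p \<noteq> q"
    and ar: "is_arrow (K::'k::field itself) n T a" and src: "asrc a = p" and tgt: "atgt a = q"
    and kd: "akind a = DK"
    and pt: "fst (T q) \<le> pt" "pt \<le> fst (T q) + snd (T q) - 1" "fst (T p) \<le> pt" "pt \<le> fst (T p) + snd (T p) - 1"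
  shows False
proof -
  have n: "n > 0" using cfg_n[OF cf] .
  have T1: "T 1 = (1, int n - 1)" and n2: "n \<ge> 2" and inj: "inj_on T {1..n-1}" using cf unfolding cfg_def by auto
  have one: "(1::nat) \<in> {1..n-1}" using n2 by auto
  have wp: "wing n (T p)" and wq: "wing n (T q)" and w1: "wing n (T 1)" using member_wing[OF cf] p q one by auto
  have bm: "bmor a = (eD (idx a) :: 'k mor)" using kd by (simp add: bmor_eq)
  have r: "(eD (idx a) :: 'k mor) \<in> rad K n (T q) (T p)" and nr: "(eD (idx a) :: 'k mor) \<notin> rad2 K n T (T q) (T p)"
    using ar bm src tgt unfolding is_arrow_def by auto
  have iBD: "idx a \<in> BD n (T q) (T p)"
  proof (rule ccontr)
    assume "idx a \<notin> BD n (T q) (T p)"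
    then have "snd (eD (idx a) :: 'k mor) (idx a) = 0" using r morph_snd unfolding rad_def by blast
    then show False by simp
  qed
  have i1: "idx a = 1" using BD_members_one[OF cf q p iBD] .
  have bds: "1 \<le> snd (T q)" "1 \<le> snd (T p)" using wp wq unfolding wing_def by auto
  have cases: "fst (T q) = 1 \<and> fst (T p) + snd (T p) = int n"
  proof -
    from BD_wing_cases[OF n wq wp iBD] show ?thesis
    proof
      assume "fst (T q) = fst (T p) + snd (T p) + 2 - idx a"
      then show ?thesis using i1 pt by simp
    qed auto
  qed
  have ncpq: "\<not> cross (T p) (T q)" "\<not> cross (T q) (T p)" using member_compat[OF cf] p q by auto
  have Tne: "T q \<noteq> T p" using inj p q pq unfolding inj_on_def by blast
  have BD11: "1 \<in> BD n (T 1) (T 1)" using one_in_BD[OF n] T1 n2 by (simp add: cong_def)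
  show False
  proof (cases "snd (T q) \<le> snd (T p)")
    case True
    have "fst (T p) \<le> fst (T q)" using nested_sub[OF ncpq(2) ncpq(1)] pt True by blast
    then have "fst (T p) = 1" using cases wp unfolding wing_def by simp
    then have "snd (T p) \<ge> int n - 1" using cases by simp
    then have p1: "p = 1" using top_one[OF cf p] by simp
    have lBT: "snd (T q) \<in> BT n (T q) (T 1)" using BT_wing[OF n wq w1] cases T1 wq unfolding wing_def by auto
    have hr: "(eT (snd (T q)) :: 'k mor) \<in> rad K n (T q) (T 1)"
      using eT_rad[OF n wq w1 lBT] Tne p1 by auto
    have gr: "(eD 1 :: 'k mor) \<in> rad K n (T 1) (T 1)" using eD_rad[OF BD11] .
    have b1: "1 \<in> BD n (T q) (T 1)" using one_in_BD[OF n, of "T q" "T 1"] bds cases T1 n2 by (simp add: cong_def)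
    have "comp n (T q) (T 1) (T 1) (eD 1) (eT (snd (T q))) = (eD 1 :: 'k mor)"
      using comp_eD_eT[OF lBT BD11] b1 by simp
    then have "madd (comp n (T q) (T 1) (T 1) (eD 1) (eT (snd (T q)))) zmor = (eD 1 :: 'k mor)"
      by (simp add: madd_zmor)
    moreover have "madd (comp n (T q) (T 1) (T 1) (eD 1) (eT (snd (T q)))) zmor \<in> rad2 K n T (T q) (T 1)"
      by (rule rad2.add[where T=T and m=1, OF one hr gr rad2.zero])
    ultimately show False using nr i1 p1 by simp
  next
    case False
    have "fst (T p) + snd (T p) \<le> fst (T q) + snd (T q)" using nested_sub[OF ncpq(1) ncpq(2)] pt False by auto
    then have "snd (T q) \<ge> int n - 1" using cases by simp
    then have q1: "q = 1" using top_one[OF cf q] by simp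
    have lBT: "int n - fst (T p) \<in> BT n (T 1) (T p)" using BT_wing[OF n w1 wp] cases T1 wp unfolding wing_def by auto
    have gr: "(eT (int n - fst (T p)) :: 'k mor) \<in> rad K n (T 1) (T p)"
      using eT_rad[OF n w1 wp lBT] Tne q1 by auto
    have hr: "(eD 1 :: 'k mor) \<in> rad K n (T 1) (T 1)" using eD_rad[OF BD11] .
    have b1: "1 \<in> BD n (T 1) (T p)" using one_in_BD[OF n, of "T 1" "T p"] bds cases T1 n2 by (simp add: cong_def)
    have e: "1 - (int n - fst (T p)) + snd (T p) = 1" using cases by simp
    have "comp n (T 1) (T 1) (T p) (eT (int n - fst (T p))) (eD 1) = (eD 1 :: 'k mor)"
      using comp_eT_eD[OF BD11 lBT] b1 unfolding e by simp
    then have "madd (comp n (T 1) (T 1) (T p) (eT (int n - fst (T p))) (eD 1)) zmor = (eD 1 :: 'k mor)"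
      by (simp add: madd_zmor)
    moreover have "madd (comp n (T 1) (T 1) (T p) (eT (int n - fst (T p))) (eD 1)) zmor \<in> rad2 K n T (T 1) (T p)"
      by (rule rad2.add[where T=T and m=1, OF one hr gr rad2.zero])
    ultimately show False using nr i1 q1 by simp
  qed
qed


lemma verts_nth_src:
  assumes "ls \<noteq> [] \<longrightarrow> lsrc (hd ls) = v"
    and "\<forall>t. Suc t < length ls \<longrightarrow> ltgt (ls ! t) = lsrc (ls ! Suc t)"
    and "t < length ls"
  shows "lsrc (ls ! t) = verts v ls ! t \<and> ltgt (ls ! t) = verts v ls ! Suc t"
proof
  show "ltgt (ls ! t) = verts v ls ! Suc t" using assms(3) unfolding verts_def by simp
  show "lsrc (ls ! t) = verts v ls ! t"
  proof (cases t)
    case 0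
    then show ?thesis using assms(1,3) unfolding verts_def by (simp add: hd_conv_nth)
  next
    case (Suc t')
    then have "ltgt (ls ! t') = lsrc (ls ! t)" using assms(2,3) by auto
    then show ?thesis using Suc assms(3) unfolding verts_def by simp
  qed
qed

lemma sigma_letter:
  assumes cf: "cfg n T" and sg: "is_sigma (K::'k::field itself) n T R v ls" and x: "x \<in> set ls"
    and common: "\<And>u w. u \<in> {1..n-1} \<Longrightarrow> w \<in> {1..n-1} \<Longrightarrow> T u \<in> R \<Longrightarrow> T w \<in> R \<Longrightarrow>
        \<exists>p. fst (T u) \<le> p \<and> p \<le> fst (T u) + snd (T u) - 1 \<and> fst (T w) \<le> p \<and> p \<le> fst (T w) + snd (T w) - 1"
  shows "akind (fst x) = TK \<and> asrc (fst x) \<in> {1..n-1} \<and> atgt (fst x) \<in> {1..n-1} \<and>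
         T (asrc (fst x)) \<in> R \<and> T (atgt (fst x)) \<in> R \<and> idx (fst x) \<in> BT n (T (atgt (fst x))) (T (asrc (fst x)))"
proof -
  have st: "is_string K n T v ls" and dv: "distinct (verts v ls)"
    and sv: "set (verts v ls) = {i \<in> {1..n-1}. T i \<in> R}" using sg unfolding is_sigma_def by auto
  have ar: "is_arrow K n T (fst x)" using st x unfolding is_string_def by auto
  have hd: "ls \<noteq> [] \<longrightarrow> lsrc (hd ls) = v" and ch: "\<forall>t. Suc t < length ls \<longrightarrow> ltgt (ls ! t) = lsrc (ls ! Suc t)"
    using st unfolding is_string_def by auto
  obtain t where t: "t < length ls" "ls ! t = x" using x by (auto simp: in_set_conv_nth)
  have e: "lsrc x = verts v ls ! t" "ltgt x = verts v ls ! Suc t" using verts_nth_src[OF hd ch t(1)] t(2) by auto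
  have len: "length (verts v ls) = Suc (length ls)" unfolding verts_def by simp
  have m1: "lsrc x \<in> set (verts v ls)" "ltgt x \<in> set (verts v ls)" using e len t(1) by auto
  have ne: "lsrc x \<noteq> ltgt x" using e dv len t(1) by (simp add: nth_eq_iff_index_eq)
  have sa: "{asrc (fst x), atgt (fst x)} = {lsrc x, ltgt x}" unfolding lsrc_def ltgt_def by auto
  have mem: "asrc (fst x) \<in> {1..n-1} \<and> T (asrc (fst x)) \<in> R" "atgt (fst x) \<in> {1..n-1} \<and> T (atgt (fst x)) \<in> R"
  proof -
    have a1: "asrc (fst x) \<in> {lsrc x, ltgt x}" using sa by (metis insertI1)
    have a2: "atgt (fst x) \<in> {lsrc x, ltgt x}" using sa by (metis insertI1 insert_commute)
    have s1: "asrc (fst x) \<in> set (verts v ls)" "atgt (fst x) \<in> set (verts v ls)" using a1 a2 m1 by auto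
    then show "asrc (fst x) \<in> {1..n-1} \<and> T (asrc (fst x)) \<in> R" "atgt (fst x) \<in> {1..n-1} \<and> T (atgt (fst x)) \<in> R"
      unfolding sv by auto
  qed
  have ne2: "asrc (fst x) \<noteq> atgt (fst x)" using ne unfolding lsrc_def ltgt_def by (auto split: if_splits)
  have tk: "akind (fst x) = TK"
  proof (cases "akind (fst x)")
    case DK
    obtain p where "fst (T (atgt (fst x))) \<le> p \<and> p \<le> fst (T (atgt (fst x))) + snd (T (atgt (fst x))) - 1 \<and>
       fst (T (asrc (fst x))) \<le> p \<and> p \<le> fst (T (asrc (fst x))) + snd (T (asrc (fst x))) - 1"
      using common mem by blast
    then have False using no_wrap_D_arrow[OF cf _ _ ne2 ar refl refl DK] mem by blast
    then show ?thesis ..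
  qed simp
  have bm: "bmor (fst x) = (eT (idx (fst x)) :: 'k mor)" using tk by (simp add: bmor_eq)
  have "(eT (idx (fst x)) :: 'k mor) \<in> rad K n (T (atgt (fst x))) (T (asrc (fst x)))"
    using ar bm unfolding is_arrow_def by auto
  then have hm: "(eT (idx (fst x)) :: 'k mor) \<in> morph K n (T (atgt (fst x))) (T (asrc (fst x)))"
    unfolding rad_def by auto
  have "idx (fst x) \<in> BT n (T (atgt (fst x))) (T (asrc (fst x)))"
  proof (rule ccontr)
    assume "idx (fst x) \<notin> BT n (T (atgt (fst x))) (T (asrc (fst x)))"
    then have "fst (eT (idx (fst x)) :: 'k mor) (idx (fst x)) = 0" by (rule morph_fst[OF hm])
    then show False by simp
  qed
  then show ?thesis using tk mem by blast
qed

lemma sublists_iff: "w \<in> sublists xs \<longleftrightarrow> (\<exists>p s. xs = p @ w @ s)"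
proof
  assume "w \<in> sublists xs"
  then obtain i j where ij: "i \<le> j" "j \<le> length xs" "w = take (j - i) (drop i xs)" unfolding sublists_def by auto
  have "xs = take i xs @ drop i xs" by simp
  also have "drop i xs = take (j - i) (drop i xs) @ drop (j - i) (drop i xs)" by (rule append_take_drop_id[symmetric])
  also have "drop (j - i) (drop i xs) = drop j xs" using ij by simp
  finally show "\<exists>p s. xs = p @ w @ s" using ij by blast
next
  assume "\<exists>p s. xs = p @ w @ s"
  then obtain p s where e: "xs = p @ w @ s" by blast
  have "w = take (length p + length w - length p) (drop (length p) xs)" using e by simp
  moreover have "length p \<le> length p + length w" "length p + length w \<le> length xs" using e by auto
  ultimately show "w \<in> sublists xs" unfolding sublists_def by blast
qed

lemma split3:
  assumes "p @ w @ s = xs @ [b] @ ys"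
  shows "(\<exists>s'. xs = p @ w @ s') \<or> (\<exists>p'. ys = p' @ w @ s) \<or> (\<exists>w1 w2. w = w1 @ [b] @ w2 \<and> xs = p @ w1 \<and> ys = w2 @ s)"
proof -
  from assms have "p @ (w @ s) = xs @ (b # ys)" by simp
  then obtain us where us: "(p = xs @ us \<and> us @ w @ s = b # ys) \<or> (p @ us = xs \<and> w @ s = us @ b # ys)"
    unfolding append_eq_append_conv2 by blast
  then show ?thesis
  proof
    assume h: "p = xs @ us \<and> us @ w @ s = b # ys"
    show ?thesis
    proof (cases us)
      case Nil
      show ?thesis
      proof (cases w)
        case Nil
        then show ?thesis using h \<open>us = []\<close> by auto
      next
        case (Cons c w')
        then have "c = b" "ys = w' @ s" using h \<open>us = []\<close> by auto
        then show ?thesis using h \<open>us = []\<close> Cons by (intro disjI2) auto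
      qed
    next
      case (Cons c us')
      then show ?thesis using h by auto
    qed
  next
    assume h: "p @ us = xs \<and> w @ s = us @ b # ys"
    then obtain vs where vs: "(w = us @ vs \<and> vs @ s = b # ys) \<or> (w @ vs = us \<and> s = vs @ b # ys)"
      unfolding append_eq_append_conv2 by blast
    then show ?thesis
    proof
      assume h2: "w = us @ vs \<and> vs @ s = b # ys"
      show ?thesis
      proof (cases vs)
        case Nil
        then show ?thesis using h h2 by auto
      next
        case (Cons c vs')
        then show ?thesis using h h2 by auto
      qed
    next
      assume h2: "w @ vs = us \<and> s = vs @ b # ys"
      then show ?thesis using h by auto
    qed
  qed
qed

lemma flip_flip [simp]: "flip (flip x) = x" unfolding flip_def by simp
lemma fst_flip [simp]: "fst (flip x) = fst x" unfolding flip_def by simp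
lemma snd_flip [simp]: "snd (flip x) = (\<not> snd x)" unfolding flip_def by simp
lemma lsrc_flip [simp]: "lsrc (flip x) = ltgt x" unfolding flip_def lsrc_def ltgt_def by simp
lemma ltgt_flip [simp]: "ltgt (flip x) = lsrc x" unfolding flip_def lsrc_def ltgt_def by simp

lemma inv_inv [simp]: "inv_letters (inv_letters ls) = ls"
proof -
  have "map (flip \<circ> flip) ls = ls" by (induction ls) auto
  then show ?thesis unfolding inv_letters_def by (simp add: rev_map)
qed
lemma inv_append: "inv_letters (a @ b) = inv_letters b @ inv_letters a"
  unfolding inv_letters_def by simp
lemma set_inv: "set (inv_letters ls) = flip ` set ls"
  unfolding inv_letters_def by simp
lemma map_fst_inv: "map fst (inv_letters ls) = rev (map fst ls)"
  unfolding inv_letters_def by (simp add: rev_map comp_def)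

lemma chain_succ: "(\<forall>t. Suc t < length ls \<longrightarrow> P (ls ! t) (ls ! Suc t)) \<longleftrightarrow> successively P ls"
  by (simp add: successively_conv_nth)

lemma endv_last: "ls \<noteq> [] \<Longrightarrow> endv v ls = ltgt (last ls)"
  unfolding endv_def verts_def by (simp add: last_map)
lemma endv_nil: "endv v [] = v"
  unfolding endv_def verts_def by simp


lemma pathmor_Cons: "r \<noteq> [] \<Longrightarrow> pathmor K n T (a # r) = comp n (T (atgt (last r))) (T (atgt a)) (T (asrc a)) (bmor a) (pathmor K n T r)"
  by (cases r) auto

lemma pm2:
  fixes K :: "'k::field itself"
  assumes cf: "cfg n T"
  shows "q \<noteq> [] \<Longrightarrow>
    \<forall>\<alpha>\<in>set q. akind \<alpha> = TK \<and> asrc \<alpha> \<in> {1..n-1} \<and> atgt \<alpha> \<in> {1..n-1} \<and> idx \<alpha> \<in> BT n (T (atgt \<alpha>)) (T (asrc \<alpha>)) \<and> a0 \<le> fst (T (atgt \<alpha>)) \<Longrightarrow>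
    successively (\<lambda>\<alpha> \<beta>. atgt \<alpha> = asrc \<beta>) q \<Longrightarrow>
    asrc (hd q) = v \<Longrightarrow> fst (T v) = a0 \<Longrightarrow>
    pathmor K n T q = eT (fst (T (atgt (last q))) + snd (T (atgt (last q))) - a0) \<and>
    fst (T (atgt (last q))) = a0 \<and>
    fst (T (atgt (last q))) + snd (T (atgt (last q))) \<le> fst (T v) + snd (T v)"
proof (induction q arbitrary: v)
  case Nil
  then show ?case by simp
next
  case (Cons a r)
  have n: "n > 0" using cfg_n[OF cf] .
  have fa: "akind a = TK" "asrc a \<in> {1..n-1}" "atgt a \<in> {1..n-1}" "idx a \<in> BT n (T (atgt a)) (T (asrc a))" "a0 \<le> fst (T (atgt a))"
    using Cons.prems(2) by auto
  have sv: "asrc a = v" using Cons.prems(4) by simp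
  have wv: "wing n (T v)" and wv': "wing n (T (atgt a))" using member_wing[OF cf] fa sv by auto
  have bt: "idx a = fst (T (atgt a)) + snd (T (atgt a)) - fst (T v) \<and> fst (T (atgt a)) \<le> fst (T v) \<and>
      fst (T v) \<le> fst (T (atgt a)) + snd (T (atgt a)) - 1 \<and> fst (T (atgt a)) + snd (T (atgt a)) \<le> fst (T v) + snd (T v)"
    using BT_wing[OF n wv' wv] fa(4) sv by blast
  have fv': "fst (T (atgt a)) = a0" using bt fa(5) Cons.prems(5) by simp
  have bma: "bmor a = (eT (idx a) :: 'k mor)" using fa(1) by (simp add: bmor_eq)
  show ?case
  proof (cases "r = []")
    case True
    then show ?thesis using bma bt fv' Cons.prems(5) by simp
  next
    case False
    have sr: "successively (\<lambda>\<alpha> \<beta>. atgt \<alpha> = asrc \<beta>) r" and hr: "atgt a = asrc (hd r)"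
      using Cons.prems(3) False by (auto simp: successively_Cons)
    have IH: "pathmor K n T r = eT (fst (T (atgt (last r))) + snd (T (atgt (last r))) - a0) \<and>
      fst (T (atgt (last r))) = a0 \<and> fst (T (atgt (last r))) + snd (T (atgt (last r))) \<le> fst (T (atgt a)) + snd (T (atgt a))"
      using Cons.IH[OF False _ sr hr[symmetric] fv'] Cons.prems(2) by auto
    define w where "w = atgt (last r)"
    have wmem: "w \<in> {1..n-1}" using Cons.prems(2) False unfolding w_def by auto
    have ww: "wing n (T w)" using member_wing[OF cf wmem] .
    have lBT: "fst (T w) + snd (T w) - a0 \<in> BT n (T w) (T (atgt a))"
      using BT_wing[OF n ww wv'] IH fv' ww unfolding w_def[symmetric] wing_def by auto
    have "pathmor K n T (a # r) = comp n (T w) (T (atgt a)) (T (asrc a)) (eT (idx a)) (eT (fst (T w) + snd (T w) - a0))"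
      by (simp only: pathmor_Cons[OF False] bma conjunct1[OF IH] w_def)
    also have "\<dots> = eT (fst (T w) + snd (T w) - a0)"
    proof -
      have e: "fst (T w) + snd (T w) - a0 + idx a - snd (T (atgt a)) = fst (T w) + snd (T w) - a0"
        using bt fv' Cons.prems(5) by simp
      have "1 \<le> fst (T w) + snd (T w) - a0" using IH ww unfolding w_def[symmetric] wing_def by simp
      moreover have "comp n (T w) (T (atgt a)) (T (asrc a)) (eT (idx a)) (eT (fst (T w) + snd (T w) - a0)) =
        (if 1 \<le> fst (T w) + snd (T w) - a0 + idx a - snd (T (atgt a)) then eT (fst (T w) + snd (T w) - a0 + idx a - snd (T (atgt a))) else (zmor :: 'k mor))"
        by (rule comp_eT_eT[OF lBT fa(4)])
      ultimately show ?thesis unfolding e by simp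
    qed
    finally show ?thesis using IH bt False unfolding w_def by simp
  qed
qed

lemma pm1:
  fixes K :: "'k::field itself"
  assumes cf: "cfg n T"
    and base: "pathmor K n T (b # q2) = eD 1"
    and W: "[fst (T i) + snd (T i) + 1 = fst (T (atgt (last (b # q2))))] (mod int n)"
    and wW: "atgt (last (b # q2)) \<in> {1..n-1}"
    and i: "i \<in> {1..n-1}"
  shows "\<forall>\<alpha>\<in>set p. akind \<alpha> = TK \<and> asrc \<alpha> \<in> {1..n-1} \<and> atgt \<alpha> \<in> {1..n-1} \<and> idx \<alpha> \<in> BT n (T (atgt \<alpha>)) (T (asrc \<alpha>)) \<and>
       fst (T (asrc \<alpha>)) + snd (T (asrc \<alpha>)) \<le> fst (T i) + snd (T i) \<Longrightarrow>
    successively (\<lambda>\<alpha> \<beta>. atgt \<alpha> = asrc \<beta>) p \<Longrightarrow>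
    (p \<noteq> [] \<longrightarrow> atgt (last p) = i) \<Longrightarrow>
    pathmor K n T (p @ b # q2) = eD 1 \<and>
    fst (T (if p = [] then i else asrc (hd p))) + snd (T (if p = [] then i else asrc (hd p))) = fst (T i) + snd (T i)"
proof (induction p)
  case Nil
  then show ?case using base by simp
next
  case (Cons a r)
  have n: "n > 0" using cfg_n[OF cf] .
  have fa: "akind a = TK" "asrc a \<in> {1..n-1}" "atgt a \<in> {1..n-1}" "idx a \<in> BT n (T (atgt a)) (T (asrc a))"
    "fst (T (asrc a)) + snd (T (asrc a)) \<le> fst (T i) + snd (T i)"
    using Cons.prems(1) by auto
  have sr: "successively (\<lambda>\<alpha> \<beta>. atgt \<alpha> = asrc \<beta>) r" using Cons.prems(2) by (auto simp: successively_Cons)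
  have lr: "r \<noteq> [] \<longrightarrow> atgt (last r) = i" using Cons.prems(3) by auto
  have IH: "pathmor K n T (r @ b # q2) = eD 1 \<and>
    fst (T (if r = [] then i else asrc (hd r))) + snd (T (if r = [] then i else asrc (hd r))) = fst (T i) + snd (T i)"
    using Cons.IH Cons.prems(1) sr lr by auto
  have at: "atgt a = (if r = [] then i else asrc (hd r))"
    using Cons.prems(2,3) by (cases r) (auto simp: successively_Cons)
  have ta: "fst (T (atgt a)) + snd (T (atgt a)) = fst (T i) + snd (T i)" using IH at by simp
  have wa: "wing n (T (asrc a))" and wa': "wing n (T (atgt a))" using member_wing[OF cf] fa by auto
  have bt: "idx a = fst (T (atgt a)) + snd (T (atgt a)) - fst (T (asrc a)) \<and> fst (T (atgt a)) \<le> fst (T (asrc a)) \<and>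
      fst (T (asrc a)) \<le> fst (T (atgt a)) + snd (T (atgt a)) - 1 \<and> fst (T (atgt a)) + snd (T (atgt a)) \<le> fst (T (asrc a)) + snd (T (asrc a))"
    using BT_wing[OF n wa' wa] fa(4) by blast
  have ts: "fst (T (asrc a)) + snd (T (asrc a)) = fst (T i) + snd (T i)" using bt ta fa(5) by simp
  define w where "w = atgt (last (b # q2))"
  have ww: "wing n (T w)" using member_wing[OF cf wW] unfolding w_def .
  have lst: "last (r @ b # q2) = last (b # q2)" by simp
  have bma: "bmor a = (eT (idx a) :: 'k mor)" using fa(1) by (simp add: bmor_eq)
  have b1: "1 \<in> BD n (T w) (T (atgt a))"
    using one_in_BD[OF n, of "T w" "T (atgt a)"] ww wa' W ta unfolding w_def[symmetric] wing_def by simp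
  have b2: "1 \<in> BD n (T w) (T (asrc a))"
    using one_in_BD[OF n, of "T w" "T (asrc a)"] ww wa W ts unfolding w_def[symmetric] wing_def by simp
  have e: "1 - idx a + snd (T (asrc a)) = 1" using bt ta ts by simp
  have "pathmor K n T (a # (r @ b # q2)) = comp n (T w) (T (atgt a)) (T (asrc a)) (eT (idx a)) (eD 1)"
    using pathmor_Cons[of "r @ b # q2" K n T a] bma IH lst unfolding w_def by simp
  also have "\<dots> = eD 1" using comp_eT_eD[OF b1 fa(4)] b2 unfolding e by simp
  finally show ?case using ts by simp
qed


lemma succ_inv: "successively P (inv_letters ls) \<longleftrightarrow> successively (\<lambda>x y. P (flip y) (flip x)) ls"
  unfolding inv_letters_def by (simp add: successively_map)

lemma hd_inv: "ls \<noteq> [] \<Longrightarrow> hd (inv_letters ls) = flip (last ls)"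
  unfolding inv_letters_def by (simp add: hd_rev last_map)

lemma dir_succ:
  assumes "successively (\<lambda>x y. ltgt x = lsrc y) w" "\<forall>x\<in>set w. snd x"
  shows "successively (\<lambda>\<alpha> \<beta>. atgt \<alpha> = asrc \<beta>) (map fst w)"
  unfolding successively_map
  using assms(1) by (rule successively_mono) (use assms(2) in \<open>auto simp: lsrc_def ltgt_def\<close>)

lemma string_parts:
  assumes "is_string K n T v ls"
  shows "v \<in> {1..n-1}" "\<forall>x\<in>set ls. is_arrow K n T (fst x)" "ls \<noteq> [] \<longrightarrow> lsrc (hd ls) = v"
    "successively (\<lambda>x y. ltgt x = lsrc y) ls"
    "successively (\<lambda>x y. \<not> (fst x = fst y \<and> snd x \<noteq> snd y)) ls"
    "\<forall>w\<in>sublists ls. (\<forall>x\<in>set w. snd x) \<longrightarrow> \<not> zero_rel K n T (map fst w)"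
    "\<forall>w\<in>sublists ls. (\<forall>x\<in>set w. \<not> snd x) \<longrightarrow> \<not> zero_rel K n T (rev (map fst w))"
  using assms unfolding is_string_def by (auto simp: successively_conv_nth)

lemma caseC:
  fixes K :: "'k::field itself"
  assumes cf: "cfg n T" and vX: "valid n X" and ti: "is_top n T (RT n X) i" and tj: "is_top n T (RD n X) j"
    and sT: "is_sigma K n T (RT n X) vT lsT" and eTi: "endv vT lsT = i"
    and sD: "is_sigma K n T (RD n X) vD lsD" and eDj: "endv vD lsD = j"
    and w1: "lsT = p @ w1" and w2: "inv_letters lsD = w2 @ s"
    and dir: "\<forall>x\<in>set w1. snd x" "\<forall>x\<in>set w2. snd x"
  shows "pathmor K n T (map fst w1 @ (i, j, DK, 1) # map fst w2) = eD 1"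
proof -
  have n: "n > 0" using cfg_n[OF cf] .
  have i: "i \<in> {1..n-1}" using ti unfolding is_top_def by auto
  have j: "j \<in> {1..n-1}" using tj unfolding is_top_def by auto
  have wi: "wing n (T i)" and wj: "wing n (T j)" using member_wing[OF cf] i j by auto
  have R: "[fst (T i) + snd (T i) + 1 = fst (T j)] (mod int n)" using R2[OF cf vX ti tj] .
  have one: "1 \<in> BD n (T j) (T i)" using one_in_BD[OF n] R wi wj unfolding wing_def by auto
  have strT: "is_string K n T vT lsT" using sT unfolding is_sigma_def by auto
  have strD: "is_string K n T vD lsD" using sD unfolding is_sigma_def by auto
  have letT: "akind (fst x) = TK \<and> asrc (fst x) \<in> {1..n-1} \<and> atgt (fst x) \<in> {1..n-1} \<and>
         T (asrc (fst x)) \<in> RT n X \<and> T (atgt (fst x)) \<in> RT n X \<and> idx (fst x) \<in> BT n (T (atgt (fst x))) (T (asrc (fst x)))"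
    if "x \<in> set lsT" for x
    using sigma_letter[OF cf sT that] RT_point[OF cf vX] by blast
  have letD: "akind (fst x) = TK \<and> asrc (fst x) \<in> {1..n-1} \<and> atgt (fst x) \<in> {1..n-1} \<and>
         T (asrc (fst x)) \<in> RD n X \<and> T (atgt (fst x)) \<in> RD n X \<and> idx (fst x) \<in> BT n (T (atgt (fst x))) (T (asrc (fst x)))"
    if "x \<in> set lsD" for x
    using sigma_letter[OF cf sD that] RD_point[OF cf] by blast
  define q2 where "q2 = map fst w2"
  define p1 where "p1 = map fst w1"
  have chD: "successively (\<lambda>x y. ltgt x = lsrc y) lsD" using string_parts(4)[OF strD] .
  have chID: "successively (\<lambda>x y. ltgt x = lsrc y) (inv_letters lsD)"
    unfolding succ_inv using chD by (rule successively_mono) auto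
  have chw2: "successively (\<lambda>x y. ltgt x = lsrc y) w2" using chID unfolding w2 successively_append_iff by auto
  have q2f: "\<forall>\<alpha>\<in>set q2. akind \<alpha> = TK \<and> asrc \<alpha> \<in> {1..n-1} \<and> atgt \<alpha> \<in> {1..n-1} \<and> idx \<alpha> \<in> BT n (T (atgt \<alpha>)) (T (asrc \<alpha>)) \<and> fst (T j) \<le> fst (T (atgt \<alpha>))"
  proof
    fix \<alpha> assume "\<alpha> \<in> set q2"
    then obtain x where x: "x \<in> set w2" "\<alpha> = fst x" unfolding q2_def by auto
    then have "x \<in> set (inv_letters lsD)" using w2 by simp
    then obtain y where y: "y \<in> set lsD" "x = flip y" unfolding set_inv by auto
    have "fst x = fst y" using y by simp
    then show "akind \<alpha> = TK \<and> asrc \<alpha> \<in> {1..n-1} \<and> atgt \<alpha> \<in> {1..n-1} \<and> idx \<alpha> \<in> BT n (T (atgt \<alpha>)) (T (asrc \<alpha>)) \<and> fst (T j) \<le> fst (T (atgt \<alpha>))"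
      using letD[OF y(1)] RD_sub_top[OF cf tj] x(2) by auto
  qed
  have sq2: "successively (\<lambda>\<alpha> \<beta>. atgt \<alpha> = asrc \<beta>) q2" unfolding q2_def using dir_succ[OF chw2 dir(2)] .
  have base: "pathmor K n T ((i, j, DK, 1) # q2) = eD 1 \<and>
     [fst (T i) + snd (T i) + 1 = fst (T (atgt (last ((i, j, DK, 1) # q2))))] (mod int n) \<and>
     atgt (last ((i, j, DK, 1) # q2)) \<in> {1..n-1}"
  proof (cases "q2 = []")
    case True
    then show ?thesis using R j by (simp add: bmor_beta atgt_def)
  next
    case False
    then have w2ne: "w2 \<noteq> []" unfolding q2_def by simp
    have lsDne: "lsD \<noteq> []" using w2ne w2 unfolding inv_letters_def by auto
    have "hd w2 = hd (inv_letters lsD)" using w2 w2ne by simp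
    also have "\<dots> = flip (last lsD)" using hd_inv[OF lsDne] .
    finally have "lsrc (hd w2) = j" using endv_last[OF lsDne] eDj by simp
    moreover have "snd (hd w2)" using dir(2) w2ne by simp
    ultimately have hq: "asrc (hd q2) = j" unfolding q2_def using w2ne by (simp add: hd_map lsrc_def)
    define w where "w = atgt (last q2)"
    have P2: "pathmor K n T q2 = eT (fst (T w) + snd (T w) - fst (T j)) \<and> fst (T w) = fst (T j) \<and>
       fst (T w) + snd (T w) \<le> fst (T j) + snd (T j)"
      using pm2[OF cf False q2f sq2 hq refl] unfolding w_def .
    have wm: "w \<in> {1..n-1}" using q2f False unfolding w_def by auto
    have ww: "wing n (T w)" using member_wing[OF cf wm] .
    have yBT: "fst (T w) + snd (T w) - fst (T j) \<in> BT n (T w) (T j)"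
      using BT_wing[OF n ww wj] P2 ww unfolding wing_def by auto
    have b1: "1 \<in> BD n (T w) (T i)" using one_in_BD[OF n, of "T w" "T i"] R P2 ww wi unfolding wing_def by simp
    have e: "1 - (fst (T w) + snd (T w) - fst (T j)) + snd (T w) = 1" using P2 by simp
    have "pathmor K n T ((i, j, DK, 1) # q2) = comp n (T w) (T j) (T i) (eD 1) (eT (fst (T w) + snd (T w) - fst (T j)))"
      using pathmor_Cons[OF False, of K n T "(i, j, DK, 1)"] P2 unfolding w_def by (simp add: bmor_beta atgt_def asrc_def)
    also have "\<dots> = eD 1" using comp_eD_eT[OF yBT one] b1 unfolding e by simp
    finally show ?thesis using R P2 wm False unfolding w_def by simp
  qed
  have chT: "successively (\<lambda>x y. ltgt x = lsrc y) lsT" using string_parts(4)[OF strT] .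
  have chw1: "successively (\<lambda>x y. ltgt x = lsrc y) w1" using chT unfolding w1 successively_append_iff by auto
  have p1f: "\<forall>\<alpha>\<in>set p1. akind \<alpha> = TK \<and> asrc \<alpha> \<in> {1..n-1} \<and> atgt \<alpha> \<in> {1..n-1} \<and> idx \<alpha> \<in> BT n (T (atgt \<alpha>)) (T (asrc \<alpha>)) \<and>
       fst (T (asrc \<alpha>)) + snd (T (asrc \<alpha>)) \<le> fst (T i) + snd (T i)"
  proof
    fix \<alpha> assume "\<alpha> \<in> set p1"
    then obtain x where x: "x \<in> set w1" "\<alpha> = fst x" unfolding p1_def by auto
    then have xl: "x \<in> set lsT" using w1 by simp
    show "akind \<alpha> = TK \<and> asrc \<alpha> \<in> {1..n-1} \<and> atgt \<alpha> \<in> {1..n-1} \<and> idx \<alpha> \<in> BT n (T (atgt \<alpha>)) (T (asrc \<alpha>)) \<and>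
       fst (T (asrc \<alpha>)) + snd (T (asrc \<alpha>)) \<le> fst (T i) + snd (T i)"
      using letT[OF xl] RT_sub_top[OF cf vX ti] x(2) by auto
  qed
  have sp1: "successively (\<lambda>\<alpha> \<beta>. atgt \<alpha> = asrc \<beta>) p1" unfolding p1_def using dir_succ[OF chw1 dir(1)] .
  have lp1: "p1 \<noteq> [] \<longrightarrow> atgt (last p1) = i"
  proof
    assume "p1 \<noteq> []"
    then have ne: "w1 \<noteq> []" unfolding p1_def by simp
    then have "lsT \<noteq> []" "last lsT = last w1" using w1 by auto
    then have "ltgt (last w1) = i" using endv_last eTi by metis
    moreover have "snd (last w1)" using dir(1) ne by simp
    ultimately show "atgt (last p1) = i" unfolding p1_def using ne by (simp add: last_map ltgt_def)
  qed
  have "pathmor K n T (p1 @ (i, j, DK, 1) # q2) = eD 1"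
    using pm1[OF cf conjunct1[OF base] _ _ i p1f sp1 lp1] base by blast
  then show ?thesis unfolding p1_def q2_def .
qed


lemma main_string:
  fixes K :: "'k::field itself"
  assumes cf: "cfg n T" and vX: "valid n X" and ti: "is_top n T (RT n X) i" and tj: "is_top n T (RD n X) j"
    and sT: "is_sigma K n T (RT n X) vT lsT" and eTi: "endv vT lsT = i"
    and sD: "is_sigma K n T (RD n X) vD lsD" and eDj: "endv vD lsD = j"
  shows "is_string K n T vT (lsT @ [((i, j, DK, 1), True)] @ inv_letters lsD)"
proof -
  define bl :: letter where "bl = ((i, j, DK, 1), True)"
  define ID where "ID = inv_letters lsD"
  have strT: "is_string K n T vT lsT" using sT unfolding is_sigma_def by auto
  have strD: "is_string K n T vD lsD" using sD unfolding is_sigma_def by auto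
  have letT: "akind (fst x) = TK" if "x \<in> set lsT" for x
    using sigma_letter[OF cf sT that] RT_point[OF cf vX] by blast
  have letD: "akind (fst x) = TK" if "x \<in> set lsD" for x
    using sigma_letter[OF cf sD that] RD_point[OF cf] by blast
  have ba: "is_arrow K n T (i, j, DK, 1)" using beta_arrow[OF cf vX ti tj] .
  have c1: "vT \<in> {1..n-1}" using string_parts(1)[OF strT] .
  have c2: "\<forall>x\<in>set (lsT @ [bl] @ ID). is_arrow K n T (fst x)"
  proof
    fix x assume "x \<in> set (lsT @ [bl] @ ID)"
    then consider "x \<in> set lsT" | "x = bl" | "x \<in> set ID" by auto
    then show "is_arrow K n T (fst x)"
    proof cases
      case 1 then show ?thesis using string_parts(2)[OF strT] by auto
    next
      case 2 then show ?thesis using ba unfolding bl_def by simp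
    next
      case 3
      then obtain y where "y \<in> set lsD" "x = flip y" unfolding ID_def set_inv by auto
      then show ?thesis using string_parts(2)[OF strD] by auto
    qed
  qed
  have c3: "lsT @ [bl] @ ID \<noteq> [] \<longrightarrow> lsrc (hd (lsT @ [bl] @ ID)) = vT"
  proof (cases "lsT = []")
    case True
    then have "vT = i" using eTi endv_nil by metis
    then show ?thesis using True unfolding bl_def by (simp add: lsrc_def asrc_def)
  next
    case False
    then show ?thesis using string_parts(3)[OF strT] by simp
  qed
  have chD: "successively (\<lambda>x y. ltgt x = lsrc y) lsD" using string_parts(4)[OF strD] .
  have jn2: "ID \<noteq> [] \<Longrightarrow> lsD \<noteq> [] \<and> hd ID = flip (last lsD)"
  proof -
    assume "ID \<noteq> []"
    then have "lsD \<noteq> []" unfolding ID_def inv_letters_def by auto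
    then show ?thesis using hd_inv unfolding ID_def by blast
  qed
  have c4: "successively (\<lambda>x y. ltgt x = lsrc y) (lsT @ [bl] @ ID)"
  proof -
    have a: "successively (\<lambda>x y. ltgt x = lsrc y) lsT" using string_parts(4)[OF strT] .
    have b: "successively (\<lambda>x y. ltgt x = lsrc y) ID"
      unfolding ID_def succ_inv using chD by (rule successively_mono) auto
    have c: "ID = [] \<or> ltgt bl = lsrc (hd ID)"
    proof (cases "ID = []")
      case False
      then have "lsD \<noteq> []" "hd ID = flip (last lsD)" using jn2 by auto
      then have "lsrc (hd ID) = j" using endv_last eDj by simp
      then show ?thesis unfolding bl_def by (simp add: ltgt_def atgt_def)
    qed simp
    have d: "lsT = [] \<or> ltgt (last lsT) = lsrc bl"
    proof (cases "lsT = []")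
      case False
      then have "ltgt (last lsT) = i" using endv_last eTi by metis
      then show ?thesis unfolding bl_def by (simp add: lsrc_def asrc_def)
    qed simp
    show ?thesis using a b c d by (auto simp: successively_append_iff successively_Cons)
  qed
  have c5: "successively (\<lambda>x y. \<not> (fst x = fst y \<and> snd x \<noteq> snd y)) (lsT @ [bl] @ ID)"
  proof -
    have a: "successively (\<lambda>x y. \<not> (fst x = fst y \<and> snd x \<noteq> snd y)) lsT" using string_parts(5)[OF strT] .
    have b: "successively (\<lambda>x y. \<not> (fst x = fst y \<and> snd x \<noteq> snd y)) ID"
      unfolding ID_def succ_inv using string_parts(5)[OF strD] by (rule successively_mono) auto
    have c: "ID = [] \<or> \<not> (fst bl = fst (hd ID) \<and> snd bl \<noteq> snd (hd ID))"
    proof (cases "ID = []")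
      case False
      then have "lsD \<noteq> []" "hd ID = flip (last lsD)" using jn2 by auto
      then have "akind (fst (hd ID)) = TK" using letD[of "last lsD"] by simp
      moreover have "akind (fst bl) = DK" unfolding bl_def by (simp add: akind_def)
      ultimately have "fst bl \<noteq> fst (hd ID)" by auto
      then show ?thesis by simp
    qed simp
    have d: "lsT = [] \<or> \<not> (fst (last lsT) = fst bl \<and> snd (last lsT) \<noteq> snd bl)"
    proof (cases "lsT = []")
      case False
      then have "akind (fst (last lsT)) = TK" using letT[of "last lsT"] by simp
      moreover have "akind (fst bl) = DK" unfolding bl_def by (simp add: akind_def)
      ultimately have "fst (last lsT) \<noteq> fst bl" by auto
      then show ?thesis by simp
    qed simp
    show ?thesis using a b c d by (auto simp: successively_append_iff successively_Cons)
  qed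
  have c67: "((\<forall>x\<in>set w. snd x) \<longrightarrow> \<not> zero_rel K n T (map fst w)) \<and>
      ((\<forall>x\<in>set w. \<not> snd x) \<longrightarrow> \<not> zero_rel K n T (rev (map fst w)))"
    if w: "w \<in> sublists (lsT @ [bl] @ ID)" for w
  proof -
    obtain p s where ps: "lsT @ [bl] @ ID = p @ w @ s" using w sublists_iff by blast
    from split3[OF ps[symmetric]] consider (A) s' where "lsT = p @ w @ s'" | (B) p' where "ID = p' @ w @ s"
      | (C) w1 w2 where "w = w1 @ [bl] @ w2" "lsT = p @ w1" "ID = w2 @ s" by blast
    then show ?thesis
    proof cases
      case A
      then have "w \<in> sublists lsT" using sublists_iff by blast
      then show ?thesis using string_parts(6,7)[OF strT] by blast
    next
      case B
      have "lsD = inv_letters ID" unfolding ID_def by simp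
      also have "\<dots> = inv_letters s @ inv_letters w @ inv_letters p'" unfolding B by (simp add: inv_append)
      finally have iw: "inv_letters w \<in> sublists lsD" using sublists_iff by blast
      have e1: "rev (map fst (inv_letters w)) = map fst w" by (simp add: map_fst_inv)
      have e2: "map fst (inv_letters w) = rev (map fst w)" by (simp add: map_fst_inv)
      show ?thesis
      proof (intro conjI impI)
        assume "\<forall>x\<in>set w. snd x"
        then have "\<forall>x\<in>set (inv_letters w). \<not> snd x" by (auto simp: set_inv)
        then have "\<not> zero_rel K n T (rev (map fst (inv_letters w)))" using string_parts(7)[OF strD] iw by blast
        then show "\<not> zero_rel K n T (map fst w)" unfolding e1 .
      next
        assume "\<forall>x\<in>set w. \<not> snd x"
        then have "\<forall>x\<in>set (inv_letters w). snd x" by (auto simp: set_inv)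
        then have "\<not> zero_rel K n T (map fst (inv_letters w))" using string_parts(6)[OF strD] iw by blast
        then show "\<not> zero_rel K n T (rev (map fst w))" unfolding e2 .
      qed
    next
      case C
      have sb: "snd bl" unfolding bl_def by simp
      show ?thesis
      proof (intro conjI impI)
        assume alld: "\<forall>x\<in>set w. snd x"
        have "pathmor K n T (map fst w1 @ (i, j, DK, 1) # map fst w2) = eD 1"
          using caseC[OF cf vX ti tj sT eTi sD eDj C(2) C(3)[unfolded ID_def]] alld C(1) by auto
        moreover have "map fst w = map fst w1 @ (i, j, DK, 1) # map fst w2" using C(1) unfolding bl_def by simp
        ultimately have pm: "pathmor K n T (map fst w) = eD 1" by simp
        have "(eD 1 :: 'k mor) \<noteq> zmor"
        proof
          assume "(eD 1 :: 'k mor) = zmor"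
          then have "snd (eD 1 :: 'k mor) 1 = snd (zmor :: 'k mor) 1" by simp
          then show False by (simp add: zmor_def)
        qed
        then show "\<not> zero_rel K n T (map fst w)" unfolding zero_rel_def using pm by simp
      next
        assume "\<forall>x\<in>set w. \<not> snd x"
        then show "\<not> zero_rel K n T (rev (map fst w))" using sb C(1) by auto
      qed
    qed
  qed
  show ?thesis
    unfolding is_string_def ID_def[symmetric] bl_def[symmetric]
    using c1 c2 c3 c4 c5 c67 by (auto simp: successively_conv_nth)
qed


theorem lemma4p7:
  fixes K :: "'k::alg_closed_field itself"
    and n :: nat and T :: "nat \<Rightarrow> obj" and X :: obj
  assumes "n \<ge> 2"
    and "inj_on T {1..n-1}"
    and "max_rigid n (T ` {1..n-1})"
    and "T 1 = (1, int n - 1)"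
    and "X \<in> Fset n"
    and "RT n X \<inter> T ` {1..n-1} \<noteq> {}"
    and "RD n X \<inter> T ` {1..n-1} \<noteq> {}"
  shows "\<forall>i j. is_top n T (RT n X) i \<and> is_top n T (RD n X) j \<longrightarrow>
           (\<exists>x. is_arrow K n T (i, j, DK, x) \<and>
              (\<forall>vT lsT vD lsD.
                 is_sigma K n T (RT n X) vT lsT \<and> endv vT lsT = i \<and>
                 is_sigma K n T (RD n X) vD lsD \<and> endv vD lsD = j \<longrightarrow>
                 is_string K n T vT (lsT @ [((i, j, DK, x), True)] @ inv_letters lsD)))"
proof (intro allI impI)
  fix i j assume h: "is_top n T (RT n X) i \<and> is_top n T (RD n X) j"
  have cf: "cfg n T" unfolding cfg_def using assms(1-4) by auto
  have vX: "valid n X" using assms(5) unfolding Fset_def by auto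
  show "\<exists>x. is_arrow K n T (i, j, DK, x) \<and>
              (\<forall>vT lsT vD lsD.
                 is_sigma K n T (RT n X) vT lsT \<and> endv vT lsT = i \<and>
                 is_sigma K n T (RD n X) vD lsD \<and> endv vD lsD = j \<longrightarrow>
                 is_string K n T vT (lsT @ [((i, j, DK, x), True)] @ inv_letters lsD))"
  proof (intro exI[of _ 1] conjI allI impI)
    show "is_arrow K n T (i, j, DK, 1)" using beta_arrow[OF cf vX] h by blast
  next
    fix vT lsT vD lsD
    assume a: "is_sigma K n T (RT n X) vT lsT \<and> endv vT lsT = i \<and> is_sigma K n T (RD n X) vD lsD \<and> endv vD lsD = j"
    show "is_string K n T vT (lsT @ [((i, j, DK, 1), True)] @ inv_letters lsD)"
      using main_string[OF cf vX] h a by blast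
  qed
qed


end
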